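(* Assume $\rho$ satisfies the Loss Kernel Assumption, let $\xi\ge0$, let $X^{(k)}\in\mathcal X$, and define for $X\in\mathbb R^{d\times(d+1)n}$ $$G(X\mid X^{(k)})=\sum_{\alpha\in\mathcal A}\sum_{(i,j)\in\vec{\mathcal E}^{\alpha\alpha}}F^{\alpha\alpha}_{ij}(X)+\sum_{\alpha\ne\beta}\sum_{(i,j)\in\vec{\mathcal E}^{\alpha\beta}}E^{\alpha\beta}_{ij}(X\mid X^{(k)})+\tfrac{\xi}{2}\|X-X^{(k)}\|^2 .$$ Then there exist positive semidefinite matrices $\Gamma^{\alpha(k)}\in\mathbb R^{(d+1)n_\alpha\times(d+1)n_\alpha}$, $\alpha\in\mathcal A$ (depending on $X^{(k)}$), such that, with $\Gamma^{(k)}=\mathrm{diag}(\Gamma^{1(k)},\dots,\Gamma^{|\mathcal A|(k)})$: (a) $G(X\mid X^{(k)})=\sum_{\alpha\in\mathcal A}G^\alpha(X^\alpha\mid X^{(k)})+F(X^{(k)})$, where $G^\alpha(X^\alpha\mid X^{(k)})=\frac12\|X^\alpha-X^{\alpha(k)}\|^2_{\Gamma^{\alpha(k)}}+\langle\nabla_{X^\alpha}F(X^{(k)}),X^\alpha-X^{\alpha(k)}\rangle$; (b) $G(X\mid X^{(k)})=\frac12\|X-X^{(k)}\|^2_{\Gamma^{(k)}}+\langle\nabla F(X^{(k)}),X-X^{(k)}\rangle+F(X^{(k)})$, and $G(X\mid X^{(k)})\ge F(X)$ for all $X$, with equality if $X=X^{(k)}$; (c) $\Gamma^{(k)}\succeq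 M^{(k)}$; (d) there is a constant PSD matrix $\Gamma\in\mathbb R^{(d+1)n\times(d+1)n}$, independent of $X^{(k)}$, with $\Gamma\succeq\Gamma^{(k)}$ for every $X^{(k)}\in\mathcal X$.
   Context: Setup. Fix an integer $d\ge 2$, a finite set of nodes $\mathcal A=\{1,\dots,|\mathcal A|\}$, positive integers $n_\alpha$ ($\alpha\in\mathcal A$) and $n=\sum_{\alpha}n_\alpha$. An element $X\in\mathbb R^{d\times(d+1)n}$ is written $X=[X^1\ \cdots\ X^{|\mathcal A|}]$ with $X^\alpha=[t^\alpha\ R^\alpha]\in\mathbb R^{d\times(d+1)n_\alpha}$, where $t^\alpha=[t^\alpha_1\ \cdots\ t^\alpha_{n_\alpha}]$ with $t^\alpha_i\in\mathbb R^d$ and $R^\alpha=[R^\alpha_1\ \cdots\ R^\alpha_{n_\alpha}]$ with $R^\alpha_i\in\mathbb R^{d\times d}$; write $X^\alpha_i=[t^\alpha_i\ R^\alpha_i]\in\mathbb R^{d\times(d+1)}$. The feasible set is $\mathcal X=\{X:\ R^\alpha_i\in SO(d)\ \forall\alpha,i\}$; $X^{(k)}=[X^{1(k)}\ \cdots\ X^{|\mathcal A|(k)}]$. We use $\langle A,B\rangle=\mathrm{tr}(AB^\top)$, $\|\cdot\|$ the Frobenius norm, and for PSD $M$, $\|Y\|_M^2=\mathrm{tr}(YMY^\top)$. Data: for each ordered pair $(\alpha,\beta)\in\mathcal A\times\mathcal A$ (including $\alpha=\beta$) a finite set $\vec{\mathcal E}^{\alpha\beta}\subseteq\{1,\dots,n_\alpha\}\times\{1,\dots,n_\beta\}$,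 and for each $(i,j)\in\vec{\mathcal E}^{\alpha\beta}$ a rotation $\tilde R^{\alpha\beta}_{ij}\in SO(d)$, a vector $\tilde t^{\alpha\beta}_{ij}\in\mathbb R^d$ and weights $\kappa^{\alpha\beta}_{ij},\tau^{\alpha\beta}_{ij}\ge0$. For $(i,j)\in\vec{\mathcal E}^{\alpha\beta}$ define the quadratic form on $\mathbb R^{d\times(d+1)n}$ $$q^{\alpha\beta}_{ij}(X)=\kappa^{\alpha\beta}_{ij}\|R^\alpha_i\tilde R^{\alpha\beta}_{ij}-R^\beta_j\|^2+\tau^{\alpha\beta}_{ij}\|R^\alpha_i\tilde t^{\alpha\beta}_{ij}+t^\alpha_i-t^\beta_j\|^2 .$$ Loss Kernel Assumption: $\rho:\mathbb R^+\to\mathbb R$ ($\mathbb R^+=[0,\infty)$) satisfies (a) $\rho(s)\ge0$ with equality iff $s=0$; (b) $\rho$ is continuously differentiable on $\mathbb R^+$; (c) $\rho$ is concave; (d) $0\le\rho'(s)\le1$ for all $s\ge0$ and $\rho'(0)=1$; (e) $\varphi(X)=\rho(\|X\|^2)$ has Lipschitz continuous gradient on $\mathbb R^{m\times n}$. Define $F^{\alpha\alpha}_{ij}(X)=\frac12q^{\alpha\alpha}_{ij}(X)$ for $(i,j)\in\vec{\mathcal E}^{\alpha\alpha}$ and $F^{\alpha\beta}_{ij}(X)=\frac12\rho\big(q^{\alpha\beta}_{ij}(X)\big)$ for $\alpha\ne\beta$, $(i,j)\in\vec{\mathcal E}^{\alpha\beta}$ (defined on all of $\mathbb R^{d\times(d+1)n}$),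 and the objective $$F(X)=\sum_{\alpha\in\mathcal A}\sum_{(i,j)\in\vec{\mathcal E}^{\alpha\alpha}}F^{\alpha\alpha}_{ij}(X)+\sum_{\alpha\ne\beta}\sum_{(i,j)\in\vec{\mathcal E}^{\alpha\beta}}F^{\alpha\beta}_{ij}(X).$$ $\nabla$ denotes the Euclidean gradient and $\nabla_{X^\alpha}$ the partial gradient w.r.t. the block $X^\alpha$. Weights: $\omega^{\alpha\beta(k)}_{ij}=1$ if $\alpha=\beta$ and $\omega^{\alpha\beta(k)}_{ij}=\rho'\big(q^{\alpha\beta}_{ij}(X^{(k)})\big)$ if $\alpha\neq\beta$. Decoupled quadratic form: for $(i,j)\in\vec{\mathcal E}^{\alpha\beta}$, $$p^{\alpha\beta}_{ij}(X)=2\Big(\kappa^{\alpha\beta}_{ij}\|R^\alpha_i\|^2+\kappa^{\alpha\beta}_{ij}\|R^\beta_j\|^2+\tau^{\alpha\beta}_{ij}\|R^\alpha_i\tilde t^{\alpha\beta}_{ij}+t^\alpha_i\|^2+\tau^{\alpha\beta}_{ij}\|t^\beta_j\|^2\Big),$$ and $E^{\alpha\beta}_{ij}(X\mid X^{(k)})=\tfrac12\omega^{\alpha\beta(k)}_{ij}\,p^{\alpha\beta}_{ij}(X-X^{(k)})+\langle\nabla F^{\alpha\beta}_{ij}(X^{(k)}),X-X^{(k)}\rangle+F^{\alpha\beta}_{ij}(X^{(k)})$. The PSD matrix $M^{(k)}\in\mathbb R^{(d+1)n\times(d+1)n}$ is defined by $\|Y\|^2_{M^{(k)}}=\sum_{\alpha}\sum_{(i,j)\in\vec{\mathcal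 E}^{\alpha\alpha}}q^{\alpha\alpha}_{ij}(Y)+\sum_{\alpha\ne\beta}\sum_{(i,j)\in\vec{\mathcal E}^{\alpha\beta}}\omega^{\alpha\beta(k)}_{ij}q^{\alpha\beta}_{ij}(Y)$ for all $Y$. *)

theory Defs
  imports "HOL-Analysis.Convex" "Jordan_Normal_Form.Determinant"
begin

definition mat_inner :: "real mat \<Rightarrow> real mat \<Rightarrow> real" where
  "mat_inner A B = (\<Sum>i<dim_row A. \<Sum>j<dim_col A. A $$ (i,j) * B $$ (i,j))"

definition fro_sq :: "real mat \<Rightarrow> real" where
  "fro_sq A = mat_inner A A"

definition fro_norm :: "real mat \<Rightarrow> real" where
  "fro_norm A = sqrt (fro_sq A)"

definition vec_sq :: "real vec \<Rightarrow> real" where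
  "vec_sq v = v \<bullet> v"

definition wnorm_sq :: "real mat \<Rightarrow> real mat \<Rightarrow> real" where
  "wnorm_sq M Y = mat_inner (Y * M) Y"

definition psd :: "nat \<Rightarrow> real mat \<Rightarrow> bool" where
  "psd n A \<longleftrightarrow> A \<in> carrier_mat n n \<and> transpose_mat A = A \<and>
     (\<forall>v \<in> carrier_vec n. 0 \<le> v \<bullet> (A *\<^sub>v v))"

definition loewner_ge :: "nat \<Rightarrow> real mat \<Rightarrow> real mat \<Rightarrow> bool" where
  "loewner_ge n A B \<longleftrightarrow> psd n (A - B)"

definition SO :: "nat \<Rightarrow> real mat set" where
  "SO d = {R \<in> carrier_mat d d. R * transpose_mat R = 1\<^sub>m d \<and> det R = 1}"

text \<open>Euclidean gradient of f at X on R^{m x n}: the matrix D such that every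
directional derivative equals the Frobenius inner product with D.  (Unique if it exists.)\<close>
definition is_mgrad :: "nat \<Rightarrow> nat \<Rightarrow> (real mat \<Rightarrow> real) \<Rightarrow> real mat \<Rightarrow> real mat \<Rightarrow> bool" where
  "is_mgrad m n f X D \<longleftrightarrow> D \<in> carrier_mat m n \<and>
     (\<forall>H \<in> carrier_mat m n.
        ((\<lambda>s. f (X + s \<cdot>\<^sub>m H)) has_real_derivative mat_inner D H) (at 0))"

definition mgrad :: "nat \<Rightarrow> nat \<Rightarrow> (real mat \<Rightarrow> real) \<Rightarrow> real mat \<Rightarrow> real mat" where
  "mgrad m n f X = (SOME D. is_mgrad m n f X D)"

definition loss_kernel :: "(real \<Rightarrow> real) \<Rightarrow> (real \<Rightarrow> real) \<Rightarrow> bool" where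
  "loss_kernel rho rho' \<longleftrightarrow>
     (\<forall>s \<ge> 0. rho s \<ge> 0 \<and> (rho s = 0 \<longleftrightarrow> s = 0)) \<and>
     (\<forall>s \<ge> 0. (rho has_real_derivative rho' s) (at s within {0..})) \<and>
     continuous_on {0..} rho' \<and>
     concave_on {0..} rho \<and>
     (\<forall>s \<ge> 0. 0 \<le> rho' s \<and> rho' s \<le> 1) \<and> rho' 0 = 1 \<and>
     (\<forall>m n. (\<forall>X \<in> carrier_mat m n. \<exists>D. is_mgrad m n (\<lambda>Y. rho (fro_sq Y)) X D) \<and>
        (\<exists>L. \<forall>X \<in> carrier_mat m n. \<forall>Y \<in> carrier_mat m n.
           fro_norm (mgrad m n (\<lambda>Z. rho (fro_sq Z)) X - mgrad m n (\<lambda>Z. rho (fro_sq Z)) Y)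
             \<le> L * fro_norm (X - Y)))"

text \<open>Nodes are 0,...,pA-1 (the paper's 1,...,|A|); poses of node a are 0,...,pn a - 1.
Edge data for the ordered pair (a,b) and edge (i,j).\<close>
record pgo_data =
  pd :: nat
  pA :: nat
  pn :: "nat \<Rightarrow> nat"
  pE :: "nat \<Rightarrow> nat \<Rightarrow> (nat \<times> nat) set"
  pRt :: "nat \<Rightarrow> nat \<Rightarrow> nat \<Rightarrow> nat \<Rightarrow> real mat"
  ptt :: "nat \<Rightarrow> nat \<Rightarrow> nat \<Rightarrow> nat \<Rightarrow> real vec"
  pkap :: "nat \<Rightarrow> nat \<Rightarrow> nat \<Rightarrow> nat \<Rightarrow> real"
  ptau :: "nat \<Rightarrow> nat \<Rightarrow> nat \<Rightarrow> nat \<Rightarrow> real"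

definition well_formed :: "pgo_data \<Rightarrow> bool" where
  "well_formed P \<longleftrightarrow> pd P \<ge> 2 \<and> (\<forall>a < pA P. pn P a > 0) \<and>
     (\<forall>a < pA P. \<forall>b < pA P. pE P a b \<subseteq> {..<pn P a} \<times> {..<pn P b} \<and>
        (\<forall>(i,j) \<in> pE P a b. pRt P a b i j \<in> SO (pd P) \<and> ptt P a b i j \<in> carrier_vec (pd P) \<and>
            pkap P a b i j \<ge> 0 \<and> ptau P a b i j \<ge> 0))"

definition ntot :: "pgo_data \<Rightarrow> nat" where
  "ntot P = (\<Sum>a<pA P. pn P a)"

definition ncols :: "pgo_data \<Rightarrow> nat" where
  "ncols P = (pd P + 1) * ntot P"

definition bdim :: "pgo_data \<Rightarrow> nat \<Rightarrow> nat" where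
  "bdim P a = (pd P + 1) * pn P a"

text \<open>Column offset of the block X^a in X = [X^0 ... X^(pA-1)].\<close>
definition boff :: "pgo_data \<Rightarrow> nat \<Rightarrow> nat" where
  "boff P a = (\<Sum>b<a. bdim P b)"

text \<open>Block X^a = [t^a R^a], a d x (d+1) n_a matrix.\<close>
definition blk :: "pgo_data \<Rightarrow> real mat \<Rightarrow> nat \<Rightarrow> real mat" where
  "blk P X a = mat (pd P) (bdim P a) (\<lambda>(r,c). X $$ (r, boff P a + c))"

definition tv :: "pgo_data \<Rightarrow> real mat \<Rightarrow> nat \<Rightarrow> nat \<Rightarrow> real vec" where
  "tv P X a i = vec (pd P) (\<lambda>r. X $$ (r, boff P a + i))"

definition Rm :: "pgo_data \<Rightarrow> real mat \<Rightarrow> nat \<Rightarrow> nat \<Rightarrow> real mat" where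
  "Rm P X a i = mat (pd P) (pd P) (\<lambda>(r,k). X $$ (r, boff P a + pn P a + pd P * i + k))"

definition feasible :: "pgo_data \<Rightarrow> real mat set" where
  "feasible P = {X \<in> carrier_mat (pd P) (ncols P). \<forall>a < pA P. \<forall>i < pn P a. Rm P X a i \<in> SO (pd P)}"

definition qf :: "pgo_data \<Rightarrow> nat \<Rightarrow> nat \<Rightarrow> nat \<Rightarrow> nat \<Rightarrow> real mat \<Rightarrow> real" where
  "qf P a b i j X =
     pkap P a b i j * fro_sq (Rm P X a i * pRt P a b i j - Rm P X b j) +
     ptau P a b i j * vec_sq (Rm P X a i *\<^sub>v ptt P a b i j + tv P X a i - tv P X b j)"

definition pf :: "pgo_data \<Rightarrow> nat \<Rightarrow> nat \<Rightarrow> nat \<Rightarrow> nat \<Rightarrow> real mat \<Rightarrow> real" where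
  "pf P a b i j X = 2 * (
     pkap P a b i j * fro_sq (Rm P X a i) + pkap P a b i j * fro_sq (Rm P X b j) +
     ptau P a b i j * vec_sq (Rm P X a i *\<^sub>v ptt P a b i j + tv P X a i) +
     ptau P a b i j * vec_sq (tv P X b j))"

definition Fij :: "pgo_data \<Rightarrow> (real \<Rightarrow> real) \<Rightarrow> nat \<Rightarrow> nat \<Rightarrow> nat \<Rightarrow> nat \<Rightarrow> real mat \<Rightarrow> real" where
  "Fij P rho a b i j X = (if a = b then qf P a b i j X / 2 else rho (qf P a b i j X) / 2)"

definition Fobj :: "pgo_data \<Rightarrow> (real \<Rightarrow> real) \<Rightarrow> real mat \<Rightarrow> real" where
  "Fobj P rho X =
     (\<Sum>a<pA P. \<Sum>(i,j) \<in> pE P a a. Fij P rho a a i j X) +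
     (\<Sum>a<pA P. \<Sum>b \<in> {..<pA P} - {a}. \<Sum>(i,j) \<in> pE P a b. Fij P rho a b i j X)"

definition omega :: "pgo_data \<Rightarrow> (real \<Rightarrow> real) \<Rightarrow> real mat \<Rightarrow> nat \<Rightarrow> nat \<Rightarrow> nat \<Rightarrow> nat \<Rightarrow> real" where
  "omega P rho' Xk a b i j = (if a = b then 1 else rho' (qf P a b i j Xk))"

definition gradX :: "pgo_data \<Rightarrow> (real mat \<Rightarrow> real) \<Rightarrow> real mat \<Rightarrow> real mat" where
  "gradX P f X = mgrad (pd P) (ncols P) f X"

definition Eij :: "pgo_data \<Rightarrow> (real \<Rightarrow> real) \<Rightarrow> (real \<Rightarrow> real) \<Rightarrow> nat \<Rightarrow> nat \<Rightarrow> nat \<Rightarrow> nat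
    \<Rightarrow> real mat \<Rightarrow> real mat \<Rightarrow> real" where
  "Eij P rho rho' a b i j X Xk =
     omega P rho' Xk a b i j * pf P a b i j (X - Xk) / 2 +
     mat_inner (gradX P (Fij P rho a b i j) Xk) (X - Xk) + Fij P rho a b i j Xk"

definition Gsur :: "pgo_data \<Rightarrow> (real \<Rightarrow> real) \<Rightarrow> (real \<Rightarrow> real) \<Rightarrow> real \<Rightarrow> real mat \<Rightarrow> real mat \<Rightarrow> real" where
  "Gsur P rho rho' xi X Xk =
     (\<Sum>a<pA P. \<Sum>(i,j) \<in> pE P a a. Fij P rho a a i j X) +
     (\<Sum>a<pA P. \<Sum>b \<in> {..<pA P} - {a}. \<Sum>(i,j) \<in> pE P a b. Eij P rho rho' a b i j X Xk) +
     xi / 2 * fro_sq (X - Xk)"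

text \<open>G^a(X^a | Xk) for a given matrix Gamma^a.  The partial gradient w.r.t. X^a is
the a-block of the Euclidean gradient.\<close>
definition Gblk :: "pgo_data \<Rightarrow> (real \<Rightarrow> real) \<Rightarrow> real mat \<Rightarrow> nat \<Rightarrow> real mat \<Rightarrow> real mat \<Rightarrow> real" where
  "Gblk P rho Gam a X Xk =
     wnorm_sq Gam (blk P X a - blk P Xk a) / 2 +
     mat_inner (blk P (gradX P (Fobj P rho) Xk) a) (blk P X a - blk P Xk a)"

definition Mk :: "pgo_data \<Rightarrow> (real \<Rightarrow> real) \<Rightarrow> real mat \<Rightarrow> real mat" where
  "Mk P rho' Xk = (SOME M. M \<in> carrier_mat (ncols P) (ncols P) \<and> transpose_mat M = M \<and>
     (\<forall>Y \<in> carrier_mat (pd P) (ncols P). wnorm_sq M Y =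
        (\<Sum>a<pA P. \<Sum>(i,j) \<in> pE P a a. qf P a a i j Y) +
        (\<Sum>a<pA P. \<Sum>b \<in> {..<pA P} - {a}. \<Sum>(i,j) \<in> pE P a b. omega P rho' Xk a b i j * qf P a b i j Y)))"

definition blockdiag :: "pgo_data \<Rightarrow> (nat \<Rightarrow> real mat) \<Rightarrow> real mat" where
  "blockdiag P Gs = diag_block_mat (map Gs [0..<pA P])"

end

theory Submission
  imports Defs
begin

definition islin :: "nat \<Rightarrow> ((nat \<Rightarrow> real) \<Rightarrow> real) \<Rightarrow> bool" where
  "islin N l \<longleftrightarrow> (\<exists>w. \<forall>v. l v = (\<Sum>k<N. w k * v k))"

definition isquad :: "nat \<Rightarrow> ((nat \<Rightarrow> real) \<Rightarrow> real) \<Rightarrow> bool" where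
  "isquad N f \<longleftrightarrow> (\<exists>B. \<forall>v. f v = (\<Sum>k<N. \<Sum>l<N. v k * v l * B k l))"

lemma islin_var: "m < N \<Longrightarrow> islin N (\<lambda>v. v m)"
  unfolding islin_def
proof (intro exI allI)
  fix v :: "nat \<Rightarrow> real" assume "m < N"
  then show "v m = (\<Sum>k<N. (if k = m then 1 else 0) * v k)"
    by (simp add: sum.delta' if_distrib[of "\<lambda>x. x * v _"] cong: if_cong)
qed

lemma islin_zero: "islin N (\<lambda>v. 0)"
  unfolding islin_def by (rule exI[of _ "\<lambda>k. 0"]) simp

lemma islin_add: "islin N f \<Longrightarrow> islin N g \<Longrightarrow> islin N (\<lambda>v. f v + g v)"
  unfolding islin_def
proof (elim exE)
  fix w1 w2 assume "\<forall>v. f v = (\<Sum>k<N. w1 k * v k)" "\<forall>v. g v = (\<Sum>k<N. w2 k * v k)"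
  then show "\<exists>w. \<forall>v. f v + g v = (\<Sum>k<N. w k * v k)"
    by (intro exI[of _ "\<lambda>k. w1 k + w2 k"]) (simp add: distrib_right sum.distrib)
qed

lemma islin_scale: "islin N f \<Longrightarrow> islin N (\<lambda>v. c * f v)"
  unfolding islin_def
proof (elim exE)
  fix w1 assume "\<forall>v. f v = (\<Sum>k<N. w1 k * v k)"
  then show "\<exists>w. \<forall>v. c * f v = (\<Sum>k<N. w k * v k)"
    by (intro exI[of _ "\<lambda>k. c * w1 k"]) (simp add: sum_distrib_left mult.assoc)
qed

lemma islin_scale2: "islin N f \<Longrightarrow> islin N (\<lambda>v. f v * c)"
  using islin_scale[of N f c] by (simp add: mult.commute)

lemma islin_diff: "islin N f \<Longrightarrow> islin N g \<Longrightarrow> islin N (\<lambda>v. f v - g v)"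
  using islin_add[of N f "\<lambda>v. (-1) * g v"] islin_scale[of N g "-1"] by simp

lemma islin_sum: "(\<And>x. x \<in> S \<Longrightarrow> islin N (f x)) \<Longrightarrow> islin N (\<lambda>v. \<Sum>x\<in>S. f x v)"
proof (induction S rule: infinite_finite_induct)
  case (infinite A) then show ?case by (simp add: islin_zero)
next
  case empty then show ?case by (simp add: islin_zero)
next
  case (insert x F) then show ?case by (simp add: islin_add)
qed

lemma isquad_zero: "isquad N (\<lambda>v. 0)"
  unfolding isquad_def by (rule exI[of _ "\<lambda>k l. 0"]) simp

lemma isquad_add: "isquad N f \<Longrightarrow> isquad N g \<Longrightarrow> isquad N (\<lambda>v. f v + g v)"
  unfolding isquad_def
proof (elim exE)
  fix w1 w2 assume "\<forall>v. f v = (\<Sum>k<N. \<Sum>l<N. v k * v l * w1 k l)" "\<forall>v. g v = (\<Sum>k<N. \<Sum>l<N. v k * v l * w2 k l)"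
  then show "\<exists>B. \<forall>v. f v + g v = (\<Sum>k<N. \<Sum>l<N. v k * v l * B k l)"
    by (intro exI[of _ "\<lambda>k l. w1 k l + w2 k l"]) (simp add: distrib_left sum.distrib)
qed

lemma isquad_scale: "isquad N f \<Longrightarrow> isquad N (\<lambda>v. c * f v)"
  unfolding isquad_def
proof (elim exE)
  fix w1 assume "\<forall>v. f v = (\<Sum>k<N. \<Sum>l<N. v k * v l * w1 k l)"
  then show "\<exists>B. \<forall>v. c * f v = (\<Sum>k<N. \<Sum>l<N. v k * v l * B k l)"
    by (intro exI[of _ "\<lambda>k l. c * w1 k l"]) (simp add: sum_distrib_left ac_simps)
qed

lemma isquad_sum: "(\<And>x. x \<in> S \<Longrightarrow> isquad N (f x)) \<Longrightarrow> isquad N (\<lambda>v. \<Sum>x\<in>S. f x v)"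
proof (induction S rule: infinite_finite_induct)
  case (infinite A) then show ?case by (simp add: isquad_zero)
next
  case empty then show ?case by (simp add: isquad_zero)
next
  case (insert x F) then show ?case by (simp add: isquad_add)
qed

lemma isquad_sq: "islin N f \<Longrightarrow> isquad N (\<lambda>v. (f v)\<^sup>2)"
  unfolding isquad_def islin_def
proof (elim exE)
  fix w assume "\<forall>v. f v = (\<Sum>k<N. w k * v k)"
  then show "\<exists>B. \<forall>v. (f v)\<^sup>2 = (\<Sum>k<N. \<Sum>l<N. v k * v l * B k l)"
    by (intro exI[of _ "\<lambda>k l. w k * w l"]) (simp add: power2_eq_square sum_product ac_simps)
qed

lemma isquad_cong: "isquad N f \<Longrightarrow> (\<And>m. m < N \<Longrightarrow> v m = v' m) \<Longrightarrow> f v = f v'"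
  unfolding isquad_def by auto

lemma isquad_0: "isquad N f \<Longrightarrow> f (\<lambda>m. 0) = 0"
  unfolding isquad_def by auto

lemma isquad_expand:
  assumes "isquad N f"
  shows "\<exists>g. \<forall>u h s. f (\<lambda>m. u m + s * h m) = f u + s * (\<Sum>l<N. h l * g u l) + s\<^sup>2 * f h"
proof -
  obtain B where B: "\<And>v. f v = (\<Sum>k<N. \<Sum>l<N. v k * v l * B k l)" using assms unfolding isquad_def by auto
  show ?thesis
  proof (intro exI allI)
    fix u h :: "nat \<Rightarrow> real" and s :: real
    have "(\<Sum>k<N. \<Sum>l<N. (u k + s * h k) * (u l + s * h l) * B k l) =
       (\<Sum>k<N. \<Sum>l<N. u k * u l * B k l) + s * (\<Sum>k<N. \<Sum>l<N. u k * h l * B k l)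
        + s * (\<Sum>k<N. \<Sum>l<N. h k * u l * B k l) + s\<^sup>2 * (\<Sum>k<N. \<Sum>l<N. h k * h l * B k l)"
      by (simp add: sum.distrib sum_distrib_left algebra_simps power2_eq_square)
    moreover have "(\<Sum>k<N. \<Sum>l<N. u k * h l * B k l) = (\<Sum>l<N. h l * (\<Sum>k<N. u k * B k l))"
      by (subst sum.swap) (simp add: sum_distrib_left ac_simps)
    moreover have "(\<Sum>k<N. \<Sum>l<N. h k * u l * B k l) = (\<Sum>l<N. h l * (\<Sum>k<N. u k * B l k))"
      by (simp add: sum_distrib_left ac_simps)
    ultimately have "(\<Sum>k<N. \<Sum>l<N. (u k + s * h k) * (u l + s * h l) * B k l) =
       (\<Sum>k<N. \<Sum>l<N. u k * u l * B k l) + s * (\<Sum>l<N. h l * (\<Sum>k<N. u k * (B k l + B l k)))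
        + s\<^sup>2 * (\<Sum>k<N. \<Sum>l<N. h k * h l * B k l)"
      by (simp add: sum.distrib distrib_left algebra_simps)
    then show "f (\<lambda>m. u m + s * h m) = f u + s * (\<Sum>l<N. h l * (\<lambda>u l. \<Sum>k<N. u k * (B k l + B l k)) u l) + s\<^sup>2 * f h"
      by (simp add: B)
  qed
qed


definition evec :: "nat \<Rightarrow> nat \<Rightarrow> real" where "evec k = (\<lambda>m. if m = k then 1 else 0)"

definition qmat :: "nat \<Rightarrow> ((nat \<Rightarrow> real) \<Rightarrow> real) \<Rightarrow> real mat" where
  "qmat N f = mat N N (\<lambda>(k,l). (f (\<lambda>m. evec k m + evec l m) - f (evec k) - f (evec l)) / 2)"

lemma qmat_carrier[simp]: "qmat N f \<in> carrier_mat N N"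
  unfolding qmat_def by simp

lemma dim_qmat[simp]: "dim_row (qmat N f) = N" "dim_col (qmat N f) = N"
  unfolding qmat_def by simp_all

lemma qmat_index: "k < N \<Longrightarrow> l < N \<Longrightarrow> qmat N f $$ (k,l) = (f (\<lambda>m. evec k m + evec l m) - f (evec k) - f (evec l)) / 2"
  unfolding qmat_def by simp

lemma qmat_transpose: "transpose_mat (qmat N f) = qmat N f"
  by (rule eq_matI) (auto simp: qmat_index add.commute)

lemma sum_delta2: "k < (N::nat) \<Longrightarrow> (\<Sum>i<N. \<Sum>j<N. if i = k then if j = l then c else 0 else 0) = (if l < N then (c::real) else 0)"
proof -
  assume k: "k < N"
  have "(\<Sum>i<N. \<Sum>j<N. if i = k then if j = l then c else 0 else 0) = (\<Sum>i<N. if i = k then (if l < N then c else 0) else 0)"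
    by (intro sum.cong refl) simp
  also have "\<dots> = (if l < N then c else 0)" using k by simp
  finally show ?thesis .
qed

lemma polar_B:
  fixes f :: "(nat \<Rightarrow> real) \<Rightarrow> real" and N :: nat
  assumes B: "\<And>v. f v = (\<Sum>k<N. \<Sum>l<N. v k * v l * B k l)" and kl: "k < N" "l < N"
  shows "(f (\<lambda>m. evec k m + evec l m) - f (evec k) - f (evec l)) / 2 = (B k l + B l k) / 2"
proof -
  have e: "f (evec k) = B k k" "f (evec l) = B l l"
    using kl by (simp_all add: B evec_def if_distrib[of "\<lambda>x. x * _"] sum_delta2 cong: if_cong)
  have "f (\<lambda>m. evec k m + evec l m) = (\<Sum>i<N. \<Sum>j<N. (evec k i * evec k j + evec k i * evec l j + evec l i * evec k j + evec l i * evec l j) * B i j)"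
    by (simp add: B algebra_simps)
  also have "\<dots> = B k k + B k l + B l k + B l l"
    using kl by (simp add: distrib_right sum.distrib evec_def if_distrib[of "\<lambda>x. x * _"] sum_delta2 cong: if_cong)
  finally show ?thesis using e by simp
qed

lemma qmat_repr:
  assumes "isquad N f"
  shows "f v = (\<Sum>k<N. \<Sum>l<N. v k * v l * qmat N f $$ (k,l))"
proof -
  obtain B where B: "\<And>v. f v = (\<Sum>k<N. \<Sum>l<N. v k * v l * B k l)" using assms unfolding isquad_def by auto
  have "(\<Sum>k<N. \<Sum>l<N. v k * v l * qmat N f $$ (k,l)) = (\<Sum>k<N. \<Sum>l<N. v k * v l * ((B k l + B l k) / 2))"
    by (intro sum.cong refl) (simp add: qmat_index polar_B[OF B])
  also have "\<dots> = (\<Sum>k<N. \<Sum>l<N. v k * v l * B k l) / 2 + (\<Sum>k<N. \<Sum>l<N. v k * v l * B l k) / 2"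
    by (simp add: sum_divide_distrib sum.distrib add_divide_distrib distrib_left)
  also have "(\<Sum>k<N. \<Sum>l<N. v k * v l * B l k) = (\<Sum>k<N. \<Sum>l<N. v k * v l * B k l)"
    by (subst sum.swap) (simp add: ac_simps)
  finally show ?thesis using B[of v] by simp
qed

lemma qmat_vec:
  assumes "isquad N f" "v \<in> carrier_vec N"
  shows "v \<bullet> (qmat N f *\<^sub>v v) = f (\<lambda>m. v $ m)"
  using assms(2)
  by (simp add: qmat_repr[OF assms(1), of "\<lambda>m. v $ m"] scalar_prod_def mult_mat_vec_def
      sum_distrib_left ac_simps lessThan_atLeast0)

lemma qmat_wnorm:
  assumes "isquad N f" "Y \<in> carrier_mat d N"
  shows "wnorm_sq (qmat N f) Y = (\<Sum>r<d. f (\<lambda>m. Y $$ (r,m)))"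
proof -
  have "wnorm_sq (qmat N f) Y = (\<Sum>r<d. \<Sum>c<N. (\<Sum>k<N. Y $$ (r,k) * qmat N f $$ (k,c)) * Y $$ (r,c))"
    using assms(2) unfolding wnorm_sq_def mat_inner_def
    by (intro sum.cong refl) (auto simp: scalar_prod_def atLeast0LessThan)
  also have "\<dots> = (\<Sum>r<d. f (\<lambda>m. Y $$ (r,m)))"
  proof (intro sum.cong refl)
    fix r
    have "(\<Sum>c<N. (\<Sum>k<N. Y $$ (r,k) * qmat N f $$ (k,c)) * Y $$ (r,c)) = (\<Sum>c<N. \<Sum>k<N. Y $$ (r,k) * Y $$ (r,c) * qmat N f $$ (k,c))"
      by (intro sum.cong refl) (simp add: sum_distrib_right sum_distrib_left mult.commute mult.left_commute)
    also have "\<dots> = (\<Sum>k<N. \<Sum>c<N. Y $$ (r,k) * Y $$ (r,c) * qmat N f $$ (k,c))"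
      by (rule sum.swap)
    finally show "(\<Sum>c<N. (\<Sum>k<N. Y $$ (r,k) * qmat N f $$ (k,c)) * Y $$ (r,c)) = f (\<lambda>m. Y $$ (r,m))"
      by (simp add: qmat_repr[OF assms(1)])
  qed
  finally show ?thesis .
qed

lemma qmat_psd:
  assumes "isquad N f" "\<And>v. f v \<ge> 0"
  shows "psd N (qmat N f)"
  unfolding psd_def using assms by (simp add: qmat_transpose qmat_vec)

lemma qmat_diff: "qmat N (\<lambda>v. f v - g v) = qmat N f - qmat N g"
  by (rule eq_matI) (auto simp: qmat_index field_simps)

lemma isquad_diff: "isquad N f \<Longrightarrow> isquad N g \<Longrightarrow> isquad N (\<lambda>v. f v - g v)"
  using isquad_add[of N f "\<lambda>v. (-1) * g v"] isquad_scale[of N g "-1"] by simp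

lemma qmat_loewner:
  assumes "isquad N f" "isquad N g" "\<And>v. g v \<le> f v"
  shows "loewner_ge N (qmat N f) (qmat N g)"
  unfolding loewner_ge_def qmat_diff[symmetric]
  by (rule qmat_psd) (use assms in \<open>auto intro: isquad_diff\<close>)

definition rowmat :: "nat \<Rightarrow> nat \<Rightarrow> real vec \<Rightarrow> real mat" where
  "rowmat d N v = mat d N (\<lambda>(r,m). if r = 0 then v $ m else 0)"

lemma vec_wnorm:
  assumes "M \<in> carrier_mat N N" "v \<in> carrier_vec N" "0 < d"
  shows "v \<bullet> (M *\<^sub>v v) = wnorm_sq M (rowmat d N v)"
proof -
  have "wnorm_sq M (rowmat d N v) = (\<Sum>r<d. \<Sum>c<N. (\<Sum>k<N. (if r = 0 then v $ k else 0) * M $$ (k,c)) * (if r = 0 then v $ c else 0))"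
    using assms unfolding wnorm_sq_def mat_inner_def rowmat_def
    by (intro sum.cong refl) (auto simp: scalar_prod_def atLeast0LessThan)
  also have "\<dots> = (\<Sum>r<d. if r = 0 then (\<Sum>c<N. (\<Sum>k<N. v $ k * M $$ (k,c)) * v $ c) else 0)"
    by (intro sum.cong refl) simp
  also have "\<dots> = (\<Sum>c<N. (\<Sum>k<N. v $ k * M $$ (k,c)) * v $ c)"
    using assms(3) by simp
  also have "\<dots> = v \<bullet> (M *\<^sub>v v)"
    using assms by (simp add: scalar_prod_def mult_mat_vec_def sum_distrib_left sum_distrib_right ac_simps atLeast0LessThan,
        subst sum.swap, simp add: mult.left_commute)
  finally show ?thesis by simp
qed


lemma sum_split_add: "(\<Sum>m<(x::nat) + y. (f m :: 'a::comm_monoid_add)) = (\<Sum>m<x. f m) + (\<Sum>m<y. f (x + m))"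
  by (induction y) (auto simp: add.assoc)

lemma sum_shift_if:
  assumes "B + N \<le> (M::nat)"
  shows "(\<Sum>k<M. if B \<le> k \<and> k < B + N then g (k - B) else 0) = (\<Sum>k<N. g k)"
proof -
  obtain R where M: "M = B + N + R" using assms le_Suc_ex by blast
  show ?thesis unfolding M sum_split_add by simp
qed

lemma isquad_shift:
  assumes q: "isquad N f" and BN: "B + N \<le> M"
  shows "isquad M (\<lambda>v. f (\<lambda>m. v (B + m)))"
proof -
  obtain Bq where Bq: "\<And>v. f v = (\<Sum>k<N. \<Sum>l<N. v k * v l * Bq k l)" using q unfolding isquad_def by auto
  define B' where "B' k l = (if B \<le> k \<and> k < B + N then if B \<le> l \<and> l < B + N then Bq (k - B) (l - B) else 0 else 0)" for k l
  show ?thesis unfolding isquad_def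
  proof (intro exI allI)
    fix v :: "nat \<Rightarrow> real"
    have inner: "(\<Sum>l<M. v k * v l * B' k l) = (if B \<le> k \<and> k < B + N then (\<Sum>l<N. v k * v (B + l) * Bq (k - B) l) else 0)" for k
    proof (cases "B \<le> k \<and> k < B + N")
      case True
      have "(\<Sum>l<M. v k * v l * B' k l) = (\<Sum>l<M. if B \<le> l \<and> l < B + N then (\<lambda>l'. v k * v (B + l') * Bq (k - B) l') (l - B) else 0)"
        by (intro sum.cong refl) (auto simp: B'_def True)
      also have "\<dots> = (\<Sum>l<N. v k * v (B + l) * Bq (k - B) l)" by (rule sum_shift_if[OF BN])
      finally show ?thesis using True by simp
    next
      case False
      then have "B' k l = 0" for l unfolding B'_def by auto
      then show ?thesis using False by auto
    qed
    have "(\<Sum>k<M. \<Sum>l<M. v k * v l * B' k l) = (\<Sum>k<M. if B \<le> k \<and> k < B + N then (\<lambda>k'. \<Sum>l<N. v (B + k') * v (B + l) * Bq k' l) (k - B) else 0)"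
      by (intro sum.cong refl) (auto simp: inner)
    also have "\<dots> = (\<Sum>k<N. \<Sum>l<N. v (B + k) * v (B + l) * Bq k l)" by (rule sum_shift_if[OF BN])
    finally show "f (\<lambda>m. v (B + m)) = (\<Sum>k<M. \<Sum>l<M. v k * v l * B' k l)" by (simp add: Bq)
  qed
qed


lemma offs_le: "a < A \<Longrightarrow> (\<Sum>b<a. sz b) + sz a \<le> (\<Sum>b<(A::nat). (sz b::nat))"
proof -
  assume "a < A"
  then have "(\<Sum>b<Suc a. sz b) \<le> (\<Sum>b<A. sz b)" by (intro sum_mono2) auto
  then show ?thesis by simp
qed

lemma isquad_Psi:
  fixes A :: nat and sz :: "nat \<Rightarrow> nat"
  assumes "\<forall>a<A. isquad (sz a) (\<psi> a)"
  shows "isquad (\<Sum>b<A. sz b) (\<lambda>v. \<Sum>a<A. \<psi> a (\<lambda>m. v ((\<Sum>b<a. sz b) + m)))"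
proof (rule isquad_sum)
  fix a assume "a \<in> {..<A}"
  then show "isquad (\<Sum>b<A. sz b) (\<lambda>v. \<psi> a (\<lambda>m. v ((\<Sum>b<a. sz b) + m)))"
    using assms offs_le[of a A sz] by (auto intro!: isquad_shift)
qed

lemma diag_qmat:
  fixes A :: nat and sz :: "nat \<Rightarrow> nat"
  assumes "\<forall>a<A. isquad (sz a) (\<psi> a)"
  shows "diag_block_mat (map (\<lambda>a. qmat (sz a) (\<psi> a)) [0..<A]) =
         qmat (\<Sum>b<A. sz b) (\<lambda>v. \<Sum>a<A. \<psi> a (\<lambda>m. v ((\<Sum>b<a. sz b) + m)))"
  using assms
proof (induction A)
  case 0
  show ?case by (rule eq_matI) auto
next
  case (Suc A)
  define Of where "Of = (\<Sum>b<A. sz b)"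
  define S where "S = sz A"
  define Psi where "Psi = (\<lambda>v. \<Sum>a<A. \<psi> a (\<lambda>m. v ((\<Sum>b<a. sz b) + m)))"
  have qA: "isquad S (\<psi> A)" using Suc.prems S_def by auto
  have qP: "isquad Of Psi" unfolding Of_def Psi_def by (rule isquad_Psi) (use Suc.prems in auto)
  have IH: "diag_block_mat (map (\<lambda>a. qmat (sz a) (\<psi> a)) [0..<A]) = qmat Of Psi"
    unfolding Of_def Psi_def by (rule Suc.IH) (use Suc.prems in auto)
  have rhs: "(\<lambda>v. \<Sum>a<Suc A. \<psi> a (\<lambda>m. v ((\<Sum>b<a. sz b) + m))) = (\<lambda>v. Psi v + \<psi> A (\<lambda>m. v (Of + m)))"
    unfolding Psi_def Of_def by simp
  have sum: "(\<Sum>b<Suc A. sz b) = Of + S" unfolding Of_def S_def by simp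
  have P1: "Psi (\<lambda>m. evec i m + evec j m) = Psi (evec i)" if "j \<ge> Of" for i j
    by (rule isquad_cong[OF qP]) (use that in \<open>auto simp: evec_def\<close>)
  have P2: "Psi (\<lambda>m. evec i m + evec j m) = Psi (evec j)" if "i \<ge> Of" for i j
    by (rule isquad_cong[OF qP]) (use that in \<open>auto simp: evec_def\<close>)
  have P0: "Psi (evec j) = 0" if "j \<ge> Of" for j
    using isquad_cong[OF qP, of "evec j" "\<lambda>m. 0"] isquad_0[OF qP] that by (auto simp: evec_def)
  have A0: "\<psi> A (\<lambda>m. evec i (Of + m)) = 0" if "i < Of" for i
    using isquad_cong[OF qA, of "\<lambda>m. evec i (Of + m)" "\<lambda>m. 0"] isquad_0[OF qA] that by (auto simp: evec_def)
  have A1: "\<psi> A (\<lambda>m. evec i (Of + m) + evec j (Of + m)) = \<psi> A (\<lambda>m. evec j (Of + m))" if "i < Of" for i j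
    by (rule isquad_cong[OF qA]) (use that in \<open>auto simp: evec_def\<close>)
  have A2: "\<psi> A (\<lambda>m. evec i (Of + m) + evec j (Of + m)) = \<psi> A (\<lambda>m. evec i (Of + m))" if "j < Of" for i j
    by (rule isquad_cong[OF qA]) (use that in \<open>auto simp: evec_def\<close>)
  have A3: "\<psi> A (\<lambda>m. evec i (Of + m)) = \<psi> A (evec (i - Of))" if "i \<ge> Of" for i
    by (rule isquad_cong[OF qA]) (use that in \<open>auto simp: evec_def\<close>)
  have A4: "\<psi> A (\<lambda>m. evec i (Of + m) + evec j (Of + m)) = \<psi> A (\<lambda>m. evec (i - Of) m + evec (j - Of) m)" if "i \<ge> Of" "j \<ge> Of" for i j
    by (rule isquad_cong[OF qA]) (use that in \<open>auto simp: evec_def\<close>)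
  have "diag_block_mat (map (\<lambda>a. qmat (sz a) (\<psi> a)) [0..<Suc A]) =
     diag_block_mat (map (\<lambda>a. qmat (sz a) (\<psi> a)) [0..<A] @ [qmat S (\<psi> A)])"
    by (simp add: S_def)
  also have "\<dots> = four_block_mat (qmat Of Psi) (0\<^sub>m Of S) (0\<^sub>m S Of) (qmat S (\<psi> A))"
    unfolding diag_block_mat_last Let_def IH by simp
  also have "\<dots> = qmat (Of + S) (\<lambda>v. Psi v + \<psi> A (\<lambda>m. v (Of + m)))"
    by (rule eq_matI) (auto simp: qmat_index P1 P2 P0 A0 A1 A2 A3 A4 not_less)
  finally show ?case unfolding rhs sum .
qed

lemma concave_tangent:
  fixes f :: "real \<Rightarrow> real"
  assumes cv: "concave_on {0..} f" and df: "(f has_real_derivative f') (at s within {0..})"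
    and s: "s \<ge> 0" and t: "t \<ge> 0"
  shows "f t \<le> f s + f' * (t - s)"
proof -
  define g where "g h = f (s + h * (t - s))" for h
  have mem: "s + h * (t - s) \<ge> 0" if "0 \<le> h" "h \<le> 1" for h
  proof -
    have "s + h * (t - s) = (1 - h) * s + h * t" by (simp add: algebra_simps)
    also have "\<dots> \<ge> 0" using that s t by simp
    finally show ?thesis .
  qed
  have conc: "g h \<ge> (1 - h) * f s + h * f t" if "0 \<le> h" "h \<le> 1" for h
  proof -
    have "f ((1 - h) *\<^sub>R s + h *\<^sub>R t) \<ge> (1 - h) * f s + h * f t"
      using concave_onD[OF cv, of h s t] that s t by simp
    moreover have "(1 - h) *\<^sub>R s + h *\<^sub>R t = s + h * (t - s)" by (simp add: algebra_simps)
    ultimately show ?thesis unfolding g_def by simp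
  qed
  have inner: "((\<lambda>h. s + h * (t - s)) has_real_derivative (t - s)) (at 0 within {0..1})"
    by (auto intro!: derivative_eq_intros)
  have img: "(\<lambda>h. s + h * (t - s)) ` {0..1} \<subseteq> {0..}" using mem by auto
  have df': "(f has_real_derivative f') (at ((\<lambda>h. s + h * (t - s)) 0) within ((\<lambda>h. s + h * (t - s)) ` {0..1}))"
    using has_field_derivative_subset[OF df img] by simp
  have "(g has_real_derivative f' * (t - s)) (at 0 within {0..1})"
    using DERIV_image_chain[OF df' inner] unfolding g_def o_def by simp
  moreover have eq: "at (0::real) within {0..1} = at_right 0" by (rule at_within_Icc_at_right) simp
  ultimately have lim: "((\<lambda>y. (g y - g 0) / y) \<longlongrightarrow> f' * (t - s)) (at_right 0)"
    unfolding has_field_derivative_iff eq by simp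
  have ev: "eventually (\<lambda>y. f t - f s \<le> (g y - g 0) / y) (at_right 0)"
    unfolding eventually_at_right_field
  proof (intro exI[of _ 1] conjI allI impI)
    fix y :: real assume y: "0 < y" "y < 1"
    have "g 0 = f s" unfolding g_def by simp
    then have "(g y - g 0) \<ge> y * (f t - f s)" using conc[of y] y by (simp add: algebra_simps)
    then show "f t - f s \<le> (g y - g 0) / y" using y by (simp add: field_simps)
  qed simp
  have "f t - f s \<le> f' * (t - s)"
    by (rule tendsto_lowerbound[OF lim ev]) simp
  then show ?thesis by simp
qed

definition rowsum :: "nat \<Rightarrow> ((nat \<Rightarrow> real) \<Rightarrow> real) \<Rightarrow> real mat \<Rightarrow> real" where
  "rowsum d \<phi> X = (\<Sum>r<d. \<phi> (\<lambda>m. X $$ (r,m)))"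

definition hasgrad :: "nat \<Rightarrow> nat \<Rightarrow> (real mat \<Rightarrow> real) \<Rightarrow> real mat \<Rightarrow> (real mat \<Rightarrow> real) \<Rightarrow> bool" where
  "hasgrad d N f X L \<longleftrightarrow> (\<exists>D. is_mgrad d N f X D \<and> (\<forall>H\<in>carrier_mat d N. mat_inner D H = L H))"

lemma mat_inner_eq: "D \<in> carrier_mat d N \<Longrightarrow> mat_inner D H = (\<Sum>r<d. \<Sum>l<N. D $$ (r,l) * H $$ (r,l))"
  unfolding mat_inner_def by simp

lemma rowsum_expand:
  assumes q: "isquad N \<phi>" and X: "X \<in> carrier_mat d N"
  shows "\<exists>D. D \<in> carrier_mat d N \<and> (\<forall>H\<in>carrier_mat d N. \<forall>s.
     rowsum d \<phi> (X + s \<cdot>\<^sub>m H) = rowsum d \<phi> X + s * mat_inner D H + s\<^sup>2 * rowsum d \<phi> H)"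
proof -
  obtain g where g: "\<And>u h s. \<phi> (\<lambda>m. u m + s * h m) = \<phi> u + s * (\<Sum>l<N. h l * g u l) + s\<^sup>2 * \<phi> h"
    using isquad_expand[OF q] by blast
  define D where "D = mat d N (\<lambda>(r,l). g (\<lambda>m. X $$ (r,m)) l)"
  show ?thesis
  proof (intro exI conjI ballI allI)
    show "D \<in> carrier_mat d N" unfolding D_def by simp
    fix H :: "real mat" and s :: real assume H: "H \<in> carrier_mat d N"
    have row: "\<phi> (\<lambda>m. (X + s \<cdot>\<^sub>m H) $$ (r,m)) = \<phi> (\<lambda>m. X $$ (r,m) + s * H $$ (r,m))" if "r < d" for r
      by (rule isquad_cong[OF q]) (use X H that in auto)
    have "rowsum d \<phi> (X + s \<cdot>\<^sub>m H) = (\<Sum>r<d. \<phi> (\<lambda>m. X $$ (r,m)) + s * (\<Sum>l<N. H $$ (r,l) * g (\<lambda>m. X $$ (r,m)) l) + s\<^sup>2 * \<phi> (\<lambda>m. H $$ (r,m)))"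
      unfolding rowsum_def by (intro sum.cong refl) (simp add: row g)
    also have "\<dots> = rowsum d \<phi> X + s * mat_inner D H + s\<^sup>2 * rowsum d \<phi> H"
      unfolding rowsum_def mat_inner_eq[OF \<open>D \<in> carrier_mat d N\<close>]
      by (simp add: sum.distrib sum_distrib_left D_def ac_simps)
    finally show "rowsum d \<phi> (X + s \<cdot>\<^sub>m H) = rowsum d \<phi> X + s * mat_inner D H + s\<^sup>2 * rowsum d \<phi> H" .
  qed
qed

lemma add_minus_cancel_mat: "X \<in> carrier_mat d N \<Longrightarrow> Y \<in> carrier_mat d N \<Longrightarrow> X + 1 \<cdot>\<^sub>m (Y - X) = (Y :: real mat)"
  by (rule eq_matI) auto

lemma hasgrad_rowsum:
  assumes q: "isquad N \<phi>" and X: "X \<in> carrier_mat d N"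
  shows "\<exists>L. hasgrad d N (rowsum d \<phi>) X L \<and>
     (\<forall>Y\<in>carrier_mat d N. rowsum d \<phi> Y = rowsum d \<phi> X + L (Y - X) + rowsum d \<phi> (Y - X))"
proof -
  obtain D where D: "D \<in> carrier_mat d N" and e: "\<And>H s. H \<in> carrier_mat d N \<Longrightarrow>
     rowsum d \<phi> (X + s \<cdot>\<^sub>m H) = rowsum d \<phi> X + s * mat_inner D H + s\<^sup>2 * rowsum d \<phi> H"
    using rowsum_expand[OF q X] by blast
  show ?thesis
  proof (intro exI conjI ballI)
    show "hasgrad d N (rowsum d \<phi>) X (mat_inner D)"
      unfolding hasgrad_def is_mgrad_def
    proof (intro exI conjI ballI)
      fix H :: "real mat" assume H: "H \<in> carrier_mat d N"
      have "((\<lambda>s. rowsum d \<phi> X + s * mat_inner D H + s\<^sup>2 * rowsum d \<phi> H) has_real_derivative mat_inner D H) (at 0)"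
        by (auto intro!: derivative_eq_intros)
      then show "((\<lambda>s. rowsum d \<phi> (X + s \<cdot>\<^sub>m H)) has_real_derivative mat_inner D H) (at 0)"
        by (simp add: e[OF H])
    qed (use D in auto)
    fix Y :: "real mat" assume Y: "Y \<in> carrier_mat d N"
    have "Y - X \<in> carrier_mat d N" using X Y by (simp add: minus_carrier_mat)
    from e[OF this, of 1] show "rowsum d \<phi> Y = rowsum d \<phi> X + mat_inner D (Y - X) + rowsum d \<phi> (Y - X)"
      using add_minus_cancel_mat[OF X Y] by simp
  qed
qed

lemma hasgrad_cong:
  assumes "hasgrad d N f X L" "X \<in> carrier_mat d N" "\<And>Y. Y \<in> carrier_mat d N \<Longrightarrow> f Y = g Y"
  shows "hasgrad d N g X L"
proof -
  have "(\<lambda>s. f (X + s \<cdot>\<^sub>m H)) = (\<lambda>s. g (X + s \<cdot>\<^sub>m H))" if "H \<in> carrier_mat d N" for H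
    using assms(2,3) that by auto
  then show ?thesis using assms(1) unfolding hasgrad_def is_mgrad_def by metis
qed

lemma hasgrad_Lcong:
  assumes "hasgrad d N f X L" "\<And>H. H \<in> carrier_mat d N \<Longrightarrow> L H = L' H"
  shows "hasgrad d N f X L'"
  using assms unfolding hasgrad_def by metis

lemma mat_inner_smult: "mat_inner (c \<cdot>\<^sub>m D) H = c * mat_inner D H"
  unfolding mat_inner_def by (simp add: sum_distrib_left ac_simps)

lemma mat_inner_add: "D1 \<in> carrier_mat d N \<Longrightarrow> D2 \<in> carrier_mat d N \<Longrightarrow> mat_inner (D1 + D2) H = mat_inner D1 H + mat_inner D2 H"
  unfolding mat_inner_def by (simp add: sum.distrib distrib_right)

lemma hasgrad_scale:
  assumes "hasgrad d N f X L"
  shows "hasgrad d N (\<lambda>Y. c * f Y) X (\<lambda>H. c * L H)"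
proof -
  obtain D where D: "is_mgrad d N f X D" "\<And>H. H \<in> carrier_mat d N \<Longrightarrow> mat_inner D H = L H"
    using assms unfolding hasgrad_def by blast
  show ?thesis unfolding hasgrad_def
  proof (intro exI conjI ballI)
    show "is_mgrad d N (\<lambda>Y. c * f Y) X (c \<cdot>\<^sub>m D)"
      using D(1) unfolding is_mgrad_def mat_inner_smult by (auto intro!: derivative_eq_intros)
    fix H :: "real mat" assume "H \<in> carrier_mat d N"
    then show "mat_inner (c \<cdot>\<^sub>m D) H = c * L H" by (simp add: mat_inner_smult D(2))
  qed
qed

lemma hasgrad_div:
  assumes "hasgrad d N f X L"
  shows "hasgrad d N (\<lambda>Y. f Y / c) X (\<lambda>H. L H / c)"
  using hasgrad_scale[OF assms, of "1/c"] by simp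

lemma hasgrad_add:
  assumes "hasgrad d N f X L" "hasgrad d N g X K"
  shows "hasgrad d N (\<lambda>Y. f Y + g Y) X (\<lambda>H. L H + K H)"
proof -
  obtain D where D: "is_mgrad d N f X D" "\<And>H. H \<in> carrier_mat d N \<Longrightarrow> mat_inner D H = L H"
    using assms(1) unfolding hasgrad_def by blast
  obtain E where E: "is_mgrad d N g X E" "\<And>H. H \<in> carrier_mat d N \<Longrightarrow> mat_inner E H = K H"
    using assms(2) unfolding hasgrad_def by blast
  have DE: "D \<in> carrier_mat d N" "E \<in> carrier_mat d N" using D(1) E(1) unfolding is_mgrad_def by auto
  show ?thesis unfolding hasgrad_def
  proof (intro exI conjI ballI)
    show "is_mgrad d N (\<lambda>Y. f Y + g Y) X (D + E)"
      using D(1) E(1) DE unfolding is_mgrad_def by (auto simp: mat_inner_add intro!: derivative_eq_intros)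
    fix H :: "real mat" assume "H \<in> carrier_mat d N"
    then show "mat_inner (D + E) H = L H + K H" using DE by (simp add: mat_inner_add D(2) E(2))
  qed
qed

lemma hasgrad_zero: "hasgrad d N (\<lambda>Y. 0) X (\<lambda>H. 0)"
  unfolding hasgrad_def is_mgrad_def
  by (intro exI[of _ "0\<^sub>m d N"]) (auto simp: mat_inner_def)

lemma hasgrad_sum:
  assumes "\<And>x. x \<in> S \<Longrightarrow> hasgrad d N (f x) X (L x)"
  shows "hasgrad d N (\<lambda>Y. \<Sum>x\<in>S. f x Y) X (\<lambda>H. \<Sum>x\<in>S. L x H)"
  using assms
proof (induction S rule: infinite_finite_induct)
  case (infinite A) then show ?case by (simp add: hasgrad_zero)
next
  case empty then show ?case by (simp add: hasgrad_zero)
next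
  case (insert x F) then show ?case by (simp add: hasgrad_add)
qed

lemma hasgrad_comp:
  assumes hg: "hasgrad d N f X L" and X: "X \<in> carrier_mat d N"
    and dr: "(rho has_real_derivative dr) (at (f X) within {0..})"
    and nn: "\<And>Y. Y \<in> carrier_mat d N \<Longrightarrow> f Y \<ge> 0"
  shows "hasgrad d N (\<lambda>Y. rho (f Y)) X (\<lambda>H. dr * L H)"
proof -
  obtain D where D: "is_mgrad d N f X D" "\<And>H. H \<in> carrier_mat d N \<Longrightarrow> mat_inner D H = L H"
    using hg unfolding hasgrad_def by blast
  show ?thesis unfolding hasgrad_def
  proof (intro exI conjI ballI)
    show "is_mgrad d N (\<lambda>Y. rho (f Y)) X (dr \<cdot>\<^sub>m D)"
      unfolding is_mgrad_def
    proof (intro conjI ballI)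
      show "dr \<cdot>\<^sub>m D \<in> carrier_mat d N" using D(1) unfolding is_mgrad_def by auto
      fix H :: "real mat" assume H: "H \<in> carrier_mat d N"
      define g where "g s = f (X + s \<cdot>\<^sub>m H)" for s
      have "X + 0 \<cdot>\<^sub>m H = X" by (rule eq_matI) (use X H in auto)
      then have g0: "g 0 = f X" unfolding g_def by simp
      have dg: "(g has_real_derivative L H) (at 0 within UNIV)"
        using D H unfolding is_mgrad_def g_def by auto
      have img: "g ` UNIV \<subseteq> {0..}" unfolding g_def using nn X H by auto
      have dr': "(rho has_real_derivative dr) (at (g 0) within g ` UNIV)"
        using has_field_derivative_subset[OF dr img] g0 by simp
      have "(rho \<circ> g has_real_derivative dr * L H) (at 0 within UNIV)"
        by (rule DERIV_image_chain[OF dr' dg])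
      then show "((\<lambda>s. rho (f (X + s \<cdot>\<^sub>m H))) has_real_derivative mat_inner (dr \<cdot>\<^sub>m D) H) (at 0)"
        unfolding g_def o_def mat_inner_smult using D(2)[OF H] by simp
    qed
    fix H :: "real mat" assume "H \<in> carrier_mat d N"
    then show "mat_inner (dr \<cdot>\<^sub>m D) H = dr * L H" by (simp add: mat_inner_smult D(2))
  qed
qed

lemma hasgrad_mgrad:
  assumes "hasgrad d N f X L" "H \<in> carrier_mat d N"
  shows "mat_inner (mgrad d N f X) H = L H" "mgrad d N f X \<in> carrier_mat d N"
proof -
  obtain D where D: "is_mgrad d N f X D" "\<And>H. H \<in> carrier_mat d N \<Longrightarrow> mat_inner D H = L H"
    using assms(1) unfolding hasgrad_def by blast
  have M: "is_mgrad d N f X (mgrad d N f X)" unfolding mgrad_def by (rule someI[of _ D]) (rule D(1))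
  then show "mgrad d N f X \<in> carrier_mat d N" unfolding is_mgrad_def by auto
  have "mat_inner (mgrad d N f X) H = mat_inner D H"
    using M D(1) assms(2) unfolding is_mgrad_def by (auto intro: DERIV_unique)
  then show "mat_inner (mgrad d N f X) H = L H" using D(2)[OF assms(2)] by simp
qed

lemma hasgrad_self:
  assumes "hasgrad d N f X L"
  shows "hasgrad d N f X (mat_inner (mgrad d N f X))"
  using hasgrad_Lcong[OF assms] hasgrad_mgrad(1)[OF assms] by metis

definition oR :: "pgo_data \<Rightarrow> nat \<Rightarrow> nat \<Rightarrow> nat" where "oR P a i = pn P a + pd P * i"

definition phiQ :: "pgo_data \<Rightarrow> nat \<Rightarrow> nat \<Rightarrow> nat \<Rightarrow> nat \<Rightarrow> nat \<Rightarrow> nat \<Rightarrow> (nat \<Rightarrow> real) \<Rightarrow> real" where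
  "phiQ P a b i j Ba Bb v = pkap P a b i j * (\<Sum>c<pd P. ((\<Sum>k<pd P. v (Ba + oR P a i + k) * pRt P a b i j $$ (k,c)) - v (Bb + oR P b j + c))\<^sup>2)
     + ptau P a b i j * ((\<Sum>k<pd P. v (Ba + oR P a i + k) * ptt P a b i j $ k) + v (Ba + i) - v (Bb + j))\<^sup>2"

definition phiPi :: "pgo_data \<Rightarrow> nat \<Rightarrow> nat \<Rightarrow> nat \<Rightarrow> nat \<Rightarrow> nat \<Rightarrow> (nat \<Rightarrow> real) \<Rightarrow> real" where
  "phiPi P a b i j Ba v = 2 * (pkap P a b i j * (\<Sum>c<pd P. (v (Ba + oR P a i + c))\<^sup>2)
     + ptau P a b i j * ((\<Sum>k<pd P. v (Ba + oR P a i + k) * ptt P a b i j $ k) + v (Ba + i))\<^sup>2)"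

definition phiPj :: "pgo_data \<Rightarrow> nat \<Rightarrow> nat \<Rightarrow> nat \<Rightarrow> nat \<Rightarrow> nat \<Rightarrow> (nat \<Rightarrow> real) \<Rightarrow> real" where
  "phiPj P a b i j Bb v = 2 * (pkap P a b i j * (\<Sum>c<pd P. (v (Bb + oR P b j + c))\<^sup>2)
     + ptau P a b i j * (v (Bb + j))\<^sup>2)"

lemma fro_sq_eq: "fro_sq M = (\<Sum>r<dim_row M. \<Sum>c<dim_col M. (M $$ (r,c))\<^sup>2)"
  unfolding fro_sq_def mat_inner_def by (simp add: power2_eq_square)

lemma vec_sq_eq: "vec_sq w = (\<Sum>r<dim_vec w. (w $ r)\<^sup>2)"
  unfolding vec_sq_def scalar_prod_def by (simp add: power2_eq_square atLeast0LessThan)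

lemma qf_rows:
  assumes "pRt P a b i j \<in> carrier_mat (pd P) (pd P)" "ptt P a b i j \<in> carrier_vec (pd P)"
  shows "qf P a b i j Y = (\<Sum>r<pd P. phiQ P a b i j (boff P a) (boff P b) (\<lambda>m. Y $$ (r,m)))"
  using assms
  unfolding qf_def phiQ_def fro_sq_eq vec_sq_eq
  by (simp add: Rm_def tv_def oR_def sum.distrib sum_distrib_left scalar_prod_def atLeast0LessThan ac_simps)

lemma pf_rows:
  assumes "ptt P a b i j \<in> carrier_vec (pd P)"
  shows "pf P a b i j Y = (\<Sum>r<pd P. phiPi P a b i j (boff P a) (\<lambda>m. Y $$ (r,m)) + phiPj P a b i j (boff P b) (\<lambda>m. Y $$ (r,m)))"
  using assms
  unfolding pf_def phiPi_def phiPj_def fro_sq_eq vec_sq_eq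
  by (simp add: Rm_def tv_def oR_def sum.distrib sum_distrib_left scalar_prod_def atLeast0LessThan ac_simps)

lemma SO_orth:
  assumes R: "R \<in> SO d"
  shows "(\<Sum>c<d. (\<Sum>k<d. x k * R $$ (k,c))\<^sup>2) = (\<Sum>k<d. (x k)\<^sup>2)"
proof -
  have Rc: "R \<in> carrier_mat d d" and RR: "R * transpose_mat R = 1\<^sub>m d" using R unfolding SO_def by auto
  have delta: "(\<Sum>c<d. R $$ (k,c) * R $$ (l,c)) = (if k = l then 1 else 0)" if "k < d" "l < d" for k l
  proof -
    have "(R * transpose_mat R) $$ (k,l) = (\<Sum>c<d. R $$ (k,c) * R $$ (l,c))"
      using Rc that by (simp add: scalar_prod_def atLeast0LessThan)
    then show ?thesis using RR that by simp
  qed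
  have "(\<Sum>c<d. (\<Sum>k<d. x k * R $$ (k,c))\<^sup>2) = (\<Sum>c<d. \<Sum>k<d. \<Sum>l<d. x k * x l * (R $$ (k,c) * R $$ (l,c)))"
    by (simp add: power2_eq_square sum_product ac_simps)
  also have "\<dots> = (\<Sum>k<d. \<Sum>c<d. \<Sum>l<d. x k * x l * (R $$ (k,c) * R $$ (l,c)))"
    by (rule sum.swap)
  also have "\<dots> = (\<Sum>k<d. \<Sum>l<d. x k * x l * (\<Sum>c<d. R $$ (k,c) * R $$ (l,c)))"
    by (rule sum.cong[OF refl]) (simp only: sum_distrib_left, rule sum.swap)
  also have "\<dots> = (\<Sum>k<d. \<Sum>l<d. x k * x l * (if k = l then 1 else 0))"
    by (intro sum.cong refl) (simp add: delta)
  also have "\<dots> = (\<Sum>k<d. (x k)\<^sup>2)"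
    by (simp add: power2_eq_square if_distrib cong: if_cong)
  finally show ?thesis .
qed

lemma isquad_phiQ:
  assumes "Ba + oR P a i + pd P \<le> N" "Bb + oR P b j + pd P \<le> N" "Ba + i < N" "Bb + j < N"
  shows "isquad N (phiQ P a b i j Ba Bb)"
  unfolding phiQ_def
  by (intro isquad_add isquad_scale isquad_sum isquad_sq islin_diff islin_add islin_sum islin_scale2 islin_var; use assms in auto)

lemma isquad_phiPi:
  assumes "Ba + oR P a i + pd P \<le> N" "Ba + i < N"
  shows "isquad N (phiPi P a b i j Ba)"
  unfolding phiPi_def
  by (intro isquad_add isquad_scale isquad_sum isquad_sq islin_diff islin_add islin_sum islin_scale2 islin_var; use assms in auto)

lemma isquad_phiPj:
  assumes "Bb + oR P b j + pd P \<le> N" "Bb + j < N"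
  shows "isquad N (phiPj P a b i j Bb)"
  unfolding phiPj_def
  by (intro isquad_add isquad_scale isquad_sum isquad_sq islin_diff islin_add islin_sum islin_scale2 islin_var; use assms in auto)

lemma phiQ_nonneg: "pkap P a b i j \<ge> 0 \<Longrightarrow> ptau P a b i j \<ge> 0 \<Longrightarrow> phiQ P a b i j Ba Bb v \<ge> 0"
  unfolding phiQ_def by (intro add_nonneg_nonneg mult_nonneg_nonneg sum_nonneg) auto

lemma phiPi_nonneg: "pkap P a b i j \<ge> 0 \<Longrightarrow> ptau P a b i j \<ge> 0 \<Longrightarrow> phiPi P a b i j Ba v \<ge> 0"
  unfolding phiPi_def by (intro add_nonneg_nonneg mult_nonneg_nonneg sum_nonneg) auto

lemma phiPj_nonneg: "pkap P a b i j \<ge> 0 \<Longrightarrow> ptau P a b i j \<ge> 0 \<Longrightarrow> phiPj P a b i j Bb v \<ge> 0"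
  unfolding phiPj_def by (intro add_nonneg_nonneg mult_nonneg_nonneg sum_nonneg) auto

lemma sq_diff_le: "(x - y)\<^sup>2 \<le> 2 * x\<^sup>2 + 2 * (y::real)\<^sup>2"
  using sum_squares_ge_zero[of "x + y" 0] by (simp add: power2_eq_square algebra_simps)

lemma phiQ_le:
  assumes "pkap P a b i j \<ge> 0" "ptau P a b i j \<ge> 0" "pRt P a b i j \<in> SO (pd P)"
  shows "phiQ P a b i j Ba Bb v \<le> phiPi P a b i j Ba v + phiPj P a b i j Bb v"
proof -
  let ?d = "pd P" and ?R = "pRt P a b i j"
  let ?x = "\<lambda>k. v (Ba + oR P a i + k)" and ?y = "\<lambda>c. v (Bb + oR P b j + c)"
  have "(\<Sum>c<?d. ((\<Sum>k<?d. ?x k * ?R $$ (k,c)) - ?y c)\<^sup>2) \<le> (\<Sum>c<?d. 2 * (\<Sum>k<?d. ?x k * ?R $$ (k,c))\<^sup>2 + 2 * (?y c)\<^sup>2)"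
    by (intro sum_mono sq_diff_le)
  also have "\<dots> = 2 * (\<Sum>k<?d. (?x k)\<^sup>2) + 2 * (\<Sum>c<?d. (?y c)\<^sup>2)"
    by (simp add: sum.distrib sum_distrib_left[symmetric] SO_orth[OF assms(3)])
  finally have k: "(\<Sum>c<?d. ((\<Sum>k<?d. ?x k * ?R $$ (k,c)) - ?y c)\<^sup>2) \<le> 2 * (\<Sum>k<?d. (?x k)\<^sup>2) + 2 * (\<Sum>c<?d. (?y c)\<^sup>2)" .
  have t: "((\<Sum>k<?d. ?x k * ptt P a b i j $ k) + v (Ba + i) - v (Bb + j))\<^sup>2 \<le>
      2 * ((\<Sum>k<?d. ?x k * ptt P a b i j $ k) + v (Ba + i))\<^sup>2 + 2 * (v (Bb + j))\<^sup>2"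
    by (rule sq_diff_le)
  show ?thesis
    unfolding phiQ_def phiPi_def phiPj_def
    using mult_left_mono[OF k assms(1)] mult_left_mono[OF t assms(2)] by (simp add: algebra_simps)
qed

lemma phiQ_shift: "phiQ P a b i j 0 0 (\<lambda>m. v (B + m)) = phiQ P a b i j B B v"
  unfolding phiQ_def by (simp add: add.assoc)
lemma phiPi_shift: "phiPi P a b i j 0 (\<lambda>m. v (B + m)) = phiPi P a b i j B v"
  unfolding phiPi_def by (simp add: add.assoc)
lemma phiPj_shift: "phiPj P a b i j 0 (\<lambda>m. v (B + m)) = phiPj P a b i j B v"
  unfolding phiPj_def by (simp add: add.assoc)

definition edge :: "pgo_data \<Rightarrow> nat \<Rightarrow> nat \<Rightarrow> nat \<Rightarrow> nat \<Rightarrow> bool" where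
  "edge P a b i j \<longleftrightarrow> a < pA P \<and> b < pA P \<and> (i,j) \<in> pE P a b"

definition esum :: "pgo_data \<Rightarrow> (nat \<Rightarrow> nat \<Rightarrow> nat \<Rightarrow> nat \<Rightarrow> real) \<Rightarrow> real" where
  "esum P f = (\<Sum>a<pA P. \<Sum>(i,j)\<in>pE P a a. f a a i j) +
     (\<Sum>a<pA P. \<Sum>b\<in>{..<pA P} - {a}. \<Sum>(i,j)\<in>pE P a b. f a b i j)"

lemma esum_cong:
  assumes "\<And>a b i j. edge P a b i j \<Longrightarrow> f a b i j = g a b i j"
  shows "esum P f = esum P g"
  unfolding esum_def using assms unfolding edge_def
  by (intro arg_cong2[where f="(+)"] sum.cong refl) auto

lemma esum_add: "esum P (\<lambda>a b i j. f a b i j + g a b i j) = esum P f + esum P g"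
  unfolding esum_def by (simp add: sum.distrib case_prod_unfold)

lemma esum_scale: "esum P (\<lambda>a b i j. c * f a b i j) = c * esum P f"
  unfolding esum_def by (simp add: sum_distrib_left case_prod_unfold distrib_left)

lemma esum_div: "esum P (\<lambda>a b i j. f a b i j / c) = esum P f / c"
  using esum_scale[of P "1/c" f] by simp

lemma swap2: "(\<Sum>a\<in>A. \<Sum>p\<in>B a. \<Sum>r\<in>R. g a p r) = (\<Sum>r\<in>R. \<Sum>a\<in>A. \<Sum>p\<in>B a. (g a p r :: real))"
proof -
  have "(\<Sum>a\<in>A. \<Sum>p\<in>B a. \<Sum>r\<in>R. g a p r) = (\<Sum>a\<in>A. \<Sum>r\<in>R. \<Sum>p\<in>B a. g a p r)"
    by (rule sum.cong[OF refl]) (rule sum.swap)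
  also have "\<dots> = (\<Sum>r\<in>R. \<Sum>a\<in>A. \<Sum>p\<in>B a. g a p r)" by (rule sum.swap)
  finally show ?thesis .
qed

lemma swap3: "(\<Sum>a\<in>A. \<Sum>b\<in>B a. \<Sum>p\<in>C a b. \<Sum>r\<in>R. g a b p r) = (\<Sum>r\<in>R. \<Sum>a\<in>A. \<Sum>b\<in>B a. \<Sum>p\<in>C a b. (g a b p r :: real))"
proof -
  have "(\<Sum>a\<in>A. \<Sum>b\<in>B a. \<Sum>p\<in>C a b. \<Sum>r\<in>R. g a b p r) = (\<Sum>a\<in>A. \<Sum>r\<in>R. \<Sum>b\<in>B a. \<Sum>p\<in>C a b. g a b p r)"
    by (rule sum.cong[OF refl]) (rule swap2)
  also have "\<dots> = (\<Sum>r\<in>R. \<Sum>a\<in>A. \<Sum>b\<in>B a. \<Sum>p\<in>C a b. g a b p r)" by (rule sum.swap)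
  finally show ?thesis .
qed

lemma esum_sum: "esum P (\<lambda>a b i j. \<Sum>r\<in>R. f r a b i j) = (\<Sum>r\<in>R. esum P (f r))"
  unfolding esum_def sum.distrib case_prod_unfold
  using swap2[where A="{..<pA P}" and B="\<lambda>a. pE P a a" and R=R and g="\<lambda>a p r. f r a a (fst p) (snd p)"]
    swap3[where A="{..<pA P}" and B="\<lambda>a. {..<pA P} - {a}" and C="\<lambda>a b. pE P a b" and R=R and g="\<lambda>a b p r. f r a b (fst p) (snd p)"]
  by simp

lemma esum_mono:
  assumes "\<And>a b i j. edge P a b i j \<Longrightarrow> f a b i j \<le> g a b i j"
  shows "esum P f \<le> esum P g"
  unfolding esum_def using assms unfolding edge_def
  by (intro add_mono sum_mono) auto

lemma esum_nonneg:
  assumes "\<And>a b i j. edge P a b i j \<Longrightarrow> 0 \<le> f a b i j"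
  shows "0 \<le> esum P f"
  using esum_mono[of P "\<lambda>a b i j. 0" f] assms by (simp add: esum_def)

lemma esum_if: "esum P (\<lambda>a b i j. if a = b then f a b i j else g a b i j) =
   (\<Sum>a<pA P. \<Sum>(i,j)\<in>pE P a a. f a a i j) + (\<Sum>a<pA P. \<Sum>b\<in>{..<pA P} - {a}. \<Sum>(i,j)\<in>pE P a b. g a b i j)"
  unfolding esum_def
  by (intro arg_cong2[where f="(+)"] sum.cong refl) auto

lemma hasgrad_esum:
  assumes "\<And>a b i j. edge P a b i j \<Longrightarrow> hasgrad d N (f a b i j) X (L a b i j)"
  shows "hasgrad d N (\<lambda>Y. esum P (\<lambda>a b i j. f a b i j Y)) X (\<lambda>H. esum P (\<lambda>a b i j. L a b i j H))"
  unfolding esum_def case_prod_unfold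
  by (intro hasgrad_add hasgrad_sum) (use assms in \<open>auto simp: edge_def\<close>)

lemma boff_Suc: "boff P (Suc a) = boff P a + bdim P a"
  unfolding boff_def by simp

lemma ncols_eq: "ncols P = (\<Sum>b<pA P. bdim P b)"
  unfolding ncols_def ntot_def bdim_def by (simp add: sum_distrib_left)

lemma blk_bound: "a < pA P \<Longrightarrow> boff P a + bdim P a \<le> ncols P"
  unfolding ncols_eq boff_def by (rule offs_le)

lemma oR_bound: "i < pn P a \<Longrightarrow> oR P a i + pd P \<le> bdim P a"
proof -
  assume "i < pn P a"
  then have "pd P * i + pd P \<le> pd P * pn P a"
    by (metis Suc_leI mult_Suc_right mult_le_mono2 add.commute)
  then show ?thesis unfolding oR_def bdim_def by simp
qed

lemma i_bound: "i < pn P a \<Longrightarrow> i < bdim P a"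
  unfolding bdim_def by simp

lemma sum_blocks: "(\<Sum>c<(\<Sum>b<(A::nat). (sz b::nat)). (f c::real)) = (\<Sum>a<A. \<Sum>m<sz a. f ((\<Sum>b<a. sz b) + m))"
  by (induction A) (simp_all add: sum_split_add)

lemma edge_wf:
  assumes wf: "well_formed P" and e: "edge P a b i j"
  shows "i < pn P a" "j < pn P b" "pRt P a b i j \<in> SO (pd P)" "ptt P a b i j \<in> carrier_vec (pd P)"
    "pkap P a b i j \<ge> 0" "ptau P a b i j \<ge> 0" "pRt P a b i j \<in> carrier_mat (pd P) (pd P)"
  using assms unfolding well_formed_def edge_def SO_def by blast+

definition psiB :: "pgo_data \<Rightarrow> (nat \<Rightarrow> nat \<Rightarrow> nat \<Rightarrow> nat \<Rightarrow> real) \<Rightarrow> real \<Rightarrow> nat \<Rightarrow> (nat \<Rightarrow> real) \<Rightarrow> real" where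
  "psiB P W xi a v = (\<Sum>(i,j)\<in>pE P a a. phiQ P a a i j 0 0 v)
     + (\<Sum>b\<in>{..<pA P} - {a}. \<Sum>(i,j)\<in>pE P a b. W a b i j * phiPi P a b i j 0 v)
     + (\<Sum>b\<in>{..<pA P} - {a}. \<Sum>(i,j)\<in>pE P b a. W b a i j * phiPj P b a i j 0 v)
     + xi * (\<Sum>m<bdim P a. (v m)\<^sup>2)"

definition PsiG :: "pgo_data \<Rightarrow> (nat \<Rightarrow> nat \<Rightarrow> nat \<Rightarrow> nat \<Rightarrow> real) \<Rightarrow> real \<Rightarrow> (nat \<Rightarrow> real) \<Rightarrow> real" where
  "PsiG P W xi v = (\<Sum>a<pA P. psiB P W xi a (\<lambda>m. v (boff P a + m)))"

definition MPsi :: "pgo_data \<Rightarrow> (nat \<Rightarrow> nat \<Rightarrow> nat \<Rightarrow> nat \<Rightarrow> real) \<Rightarrow> (nat \<Rightarrow> real) \<Rightarrow> real" where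
  "MPsi P W v = esum P (\<lambda>a b i j. if a = b then phiQ P a b i j (boff P a) (boff P b) v
      else W a b i j * phiQ P a b i j (boff P a) (boff P b) v)"

lemma psiB_isquad:
  assumes wf: "well_formed P" and a: "a < pA P"
  shows "isquad (bdim P a) (psiB P W xi a)"
proof -
  have e: "edge P a' b' i j" if "a' < pA P" "b' < pA P" "(i,j) \<in> pE P a' b'" for a' b' i j
    using that unfolding edge_def by auto
  have q1: "isquad (bdim P a) (\<lambda>v. \<Sum>(i,j)\<in>pE P a a. phiQ P a a i j 0 0 v)"
    unfolding case_prod_unfold
  proof (rule isquad_sum)
    fix p assume p: "p \<in> pE P a a"
    obtain i j where pij: "p = (i,j)" by (cases p)
    have "i < pn P a" "j < pn P a" using edge_wf[OF wf e[OF a a]] p pij by auto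
    then show "isquad (bdim P a) (\<lambda>v. phiQ P a a (fst p) (snd p) 0 0 v)"
      by (simp add: pij, intro isquad_phiQ) (auto simp: oR_bound i_bound)
  qed
  have q2: "isquad (bdim P a) (\<lambda>v. \<Sum>b\<in>{..<pA P} - {a}. \<Sum>(i,j)\<in>pE P a b. W a b i j * phiPi P a b i j 0 v)"
    unfolding case_prod_unfold
  proof (intro isquad_sum isquad_scale)
    fix b p assume b: "b \<in> {..<pA P} - {a}" and p: "p \<in> pE P a b"
    obtain i j where pij: "p = (i,j)" by (cases p)
    have "i < pn P a" using edge_wf[OF wf e[OF a, of b]] b p pij by auto
    then show "isquad (bdim P a) (phiPi P a b (fst p) (snd p) 0)"
      by (simp add: pij, intro isquad_phiPi) (auto simp: oR_bound i_bound)
  qed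
  have q3: "isquad (bdim P a) (\<lambda>v. \<Sum>b\<in>{..<pA P} - {a}. \<Sum>(i,j)\<in>pE P b a. W b a i j * phiPj P b a i j 0 v)"
    unfolding case_prod_unfold
  proof (intro isquad_sum isquad_scale)
    fix b p assume b: "b \<in> {..<pA P} - {a}" and p: "p \<in> pE P b a"
    obtain i j where pij: "p = (i,j)" by (cases p)
    have "j < pn P a" using edge_wf[OF wf e[of b a]] b p pij a by auto
    then show "isquad (bdim P a) (phiPj P b a (fst p) (snd p) 0)"
      by (simp add: pij, intro isquad_phiPj) (auto simp: oR_bound i_bound)
  qed
  have q4: "isquad (bdim P a) (\<lambda>v. xi * (\<Sum>m<bdim P a. (v m)\<^sup>2))"
    by (intro isquad_scale isquad_sum isquad_sq islin_var) auto
  show ?thesis unfolding psiB_def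
    by (rule isquad_add[OF isquad_add[OF isquad_add[OF q1 q2] q3] q4])
qed

lemma psiB_nonneg:
  assumes wf: "well_formed P" and a: "a < pA P" and W: "\<And>a b i j. edge P a b i j \<Longrightarrow> W a b i j \<ge> 0"
    and xi: "xi \<ge> 0"
  shows "psiB P W xi a v \<ge> 0"
proof -
  have e: "edge P a' b' i j" if "a' < pA P" "b' < pA P" "(i,j) \<in> pE P a' b'" for a' b' i j
    using that unfolding edge_def by auto
  have kt: "pkap P a' b' i j \<ge> 0 \<and> ptau P a' b' i j \<ge> 0 \<and> W a' b' i j \<ge> 0"
    if "a' < pA P" "b' < pA P" "(i,j) \<in> pE P a' b'" for a' b' i j
    using edge_wf[OF wf e[OF that]] W[OF e[OF that]] by auto
  have t1: "0 \<le> (\<Sum>(i,j)\<in>pE P a a. phiQ P a a i j 0 0 v)"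
    by (intro sum_nonneg) (use kt a in \<open>auto intro!: phiQ_nonneg\<close>)
  have t2: "0 \<le> (\<Sum>b\<in>{..<pA P} - {a}. \<Sum>(i,j)\<in>pE P a b. W a b i j * phiPi P a b i j 0 v)"
    by (intro sum_nonneg) (use kt a in \<open>auto intro!: phiPi_nonneg mult_nonneg_nonneg\<close>)
  have t3: "0 \<le> (\<Sum>b\<in>{..<pA P} - {a}. \<Sum>(i,j)\<in>pE P b a. W b a i j * phiPj P b a i j 0 v)"
    by (intro sum_nonneg) (use kt a in \<open>auto intro!: phiPj_nonneg mult_nonneg_nonneg\<close>)
  have t4: "0 \<le> xi * (\<Sum>m<bdim P a. (v m)\<^sup>2)" using xi by (intro mult_nonneg_nonneg sum_nonneg) auto
  show ?thesis unfolding psiB_def using t1 t2 t3 t4 by linarith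
qed

lemma PsiG_isquad:
  assumes wf: "well_formed P"
  shows "isquad (ncols P) (PsiG P W xi)"
  unfolding PsiG_def ncols_eq boff_def
  by (rule isquad_Psi) (use psiB_isquad[OF wf] in auto)

lemma PsiG_nonneg:
  assumes wf: "well_formed P" and W: "\<And>a b i j. edge P a b i j \<Longrightarrow> W a b i j \<ge> 0" and xi: "xi \<ge> 0"
  shows "PsiG P W xi v \<ge> 0"
  unfolding PsiG_def by (intro sum_nonneg psiB_nonneg[OF wf _ W xi]) auto

lemma blockdiag_eq:
  assumes wf: "well_formed P"
  shows "blockdiag P (\<lambda>a. qmat (bdim P a) (psiB P W xi a)) = qmat (ncols P) (PsiG P W xi)"
  unfolding blockdiag_def PsiG_def ncols_eq boff_def
  by (rule diag_qmat) (use psiB_isquad[OF wf] in auto)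

lemma swap_off: "(\<Sum>a<A. \<Sum>b\<in>{..<A} - {a}. g a b) = (\<Sum>a<(A::nat). \<Sum>b\<in>{..<A} - {a}. (g b a :: real))"
proof -
  have h1: "{y. y \<in> {..<A} \<and> x \<noteq> y} = {..<A} - {x}" for x by auto
  have h2: "{x. x \<in> {..<A} \<and> x \<noteq> y} = {..<A} - {y}" for y by auto
  from sum.swap_restrict[of "{..<A}" "{..<A}" g "\<lambda>a b. a \<noteq> b"]
  show ?thesis unfolding h1 h2 by simp
qed

lemma PsiG_expand:
  "PsiG P W xi v = esum P (\<lambda>a b i j. if a = b then phiQ P a b i j (boff P a) (boff P b) v
      else W a b i j * (phiPi P a b i j (boff P a) v + phiPj P a b i j (boff P b) v)) + xi * (\<Sum>m<ncols P. (v m)\<^sup>2)"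
proof -
  have D: "(\<Sum>a<pA P. \<Sum>m<bdim P a. (v (boff P a + m))\<^sup>2) = (\<Sum>m<ncols P. (v m)\<^sup>2)"
    unfolding ncols_eq boff_def by (rule sum_blocks[symmetric])
  have C: "(\<Sum>a<pA P. \<Sum>b\<in>{..<pA P} - {a}. \<Sum>(i,j)\<in>pE P b a. W b a i j * phiPj P b a i j (boff P a) v) =
       (\<Sum>a<pA P. \<Sum>b\<in>{..<pA P} - {a}. \<Sum>(i,j)\<in>pE P a b. W a b i j * phiPj P a b i j (boff P b) v)"
    by (rule swap_off)
  show ?thesis
    unfolding PsiG_def psiB_def phiQ_shift phiPi_shift phiPj_shift sum.distrib C esum_if
    by (simp add: sum.distrib sum_distrib_left[symmetric] D[symmetric] distrib_left case_prod_unfold)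
qed


lemma isquad_esum:
  assumes "\<And>a b i j. edge P a b i j \<Longrightarrow> isquad N (f a b i j)"
  shows "isquad N (\<lambda>v. esum P (\<lambda>a b i j. f a b i j v))"
  unfolding esum_def case_prod_unfold
  by (intro isquad_add isquad_sum) (use assms in \<open>auto simp: edge_def\<close>)

lemma edge_bounds:
  assumes wf: "well_formed P" and e: "edge P a b i j"
  shows "boff P a + oR P a i + pd P \<le> ncols P" "boff P b + oR P b j + pd P \<le> ncols P"
    "boff P a + i < ncols P" "boff P b + j < ncols P"
proof -
  have ab: "a < pA P" "b < pA P" using e unfolding edge_def by auto
  note w = edge_wf[OF wf e]
  show "boff P a + oR P a i + pd P \<le> ncols P" using oR_bound[OF w(1)] blk_bound[OF ab(1)] by simp
  show "boff P b + oR P b j + pd P \<le> ncols P" using oR_bound[OF w(2)] blk_bound[OF ab(2)] by simp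
  show "boff P a + i < ncols P" using i_bound[OF w(1)] blk_bound[OF ab(1)] by simp
  show "boff P b + j < ncols P" using i_bound[OF w(2)] blk_bound[OF ab(2)] by simp
qed

lemma isquad_phiQ_edge:
  assumes wf: "well_formed P" and e: "edge P a b i j"
  shows "isquad (ncols P) (phiQ P a b i j (boff P a) (boff P b))"
  using edge_bounds[OF wf e] by (intro isquad_phiQ) auto

lemma MPsi_isquad:
  assumes wf: "well_formed P"
  shows "isquad (ncols P) (MPsi P W)"
  unfolding MPsi_def
proof (rule isquad_esum)
  fix a b i j assume e: "edge P a b i j"
  show "isquad (ncols P) (\<lambda>v. if a = b then phiQ P a b i j (boff P a) (boff P b) v
      else W a b i j * phiQ P a b i j (boff P a) (boff P b) v)"
    using isquad_phiQ_edge[OF wf e] isquad_scale[OF isquad_phiQ_edge[OF wf e]] by (cases "a = b") auto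
qed

lemma MPsi_le_PsiG:
  assumes wf: "well_formed P" and W: "\<And>a b i j. edge P a b i j \<Longrightarrow> W a b i j \<ge> 0" and xi: "xi \<ge> 0"
  shows "MPsi P W v \<le> PsiG P W xi v"
proof -
  have "MPsi P W v \<le> esum P (\<lambda>a b i j. if a = b then phiQ P a b i j (boff P a) (boff P b) v
      else W a b i j * (phiPi P a b i j (boff P a) v + phiPj P a b i j (boff P b) v))"
    unfolding MPsi_def
  proof (rule esum_mono)
    fix a b i j assume e: "edge P a b i j"
    note w = edge_wf[OF wf e]
    show "(if a = b then phiQ P a b i j (boff P a) (boff P b) v else W a b i j * phiQ P a b i j (boff P a) (boff P b) v)
      \<le> (if a = b then phiQ P a b i j (boff P a) (boff P b) v
      else W a b i j * (phiPi P a b i j (boff P a) v + phiPj P a b i j (boff P b) v))"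
      using mult_left_mono[OF phiQ_le[OF w(5,6,3)] W[OF e]] by auto
  qed
  moreover have "0 \<le> xi * (\<Sum>m<ncols P. (v m)\<^sup>2)" using xi by (intro mult_nonneg_nonneg sum_nonneg) auto
  ultimately show ?thesis unfolding PsiG_expand by linarith
qed

lemma PsiG_mono:
  assumes wf: "well_formed P" and W: "\<And>a b i j. edge P a b i j \<Longrightarrow> W a b i j \<ge> 0 \<and> W a b i j \<le> 1"
  shows "PsiG P W xi v \<le> PsiG P (\<lambda>a b i j. 1) xi v"
  unfolding PsiG_expand
proof (intro add_right_mono esum_mono)
  fix a b i j assume e: "edge P a b i j"
  note w = edge_wf[OF wf e]
  have "0 \<le> phiPi P a b i j (boff P a) v + phiPj P a b i j (boff P b) v"
    using phiPi_nonneg[OF w(5,6)] phiPj_nonneg[OF w(5,6)] by (intro add_nonneg_nonneg)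
  then have "W a b i j * (phiPi P a b i j (boff P a) v + phiPj P a b i j (boff P b) v)
      \<le> 1 * (phiPi P a b i j (boff P a) v + phiPj P a b i j (boff P b) v)"
    using W[OF e] by (intro mult_right_mono) auto
  then show "(if a = b then phiQ P a b i j (boff P a) (boff P b) v
      else W a b i j * (phiPi P a b i j (boff P a) v + phiPj P a b i j (boff P b) v))
      \<le> (if a = b then phiQ P a b i j (boff P a) (boff P b) v
      else 1 * (phiPi P a b i j (boff P a) v + phiPj P a b i j (boff P b) v))"
    by auto
qed

lemma PsiG_rows:
  assumes wf: "well_formed P" and Y: "Y \<in> carrier_mat (pd P) (ncols P)"
  shows "(\<Sum>r<pd P. PsiG P W xi (\<lambda>m. Y $$ (r,m))) =
    esum P (\<lambda>a b i j. if a = b then qf P a b i j Y else W a b i j * pf P a b i j Y) + xi * fro_sq Y"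
proof -
  have "(\<Sum>r<pd P. PsiG P W xi (\<lambda>m. Y $$ (r,m))) =
     esum P (\<lambda>a b i j. \<Sum>r<pd P. if a = b then phiQ P a b i j (boff P a) (boff P b) (\<lambda>m. Y $$ (r,m))
      else W a b i j * (phiPi P a b i j (boff P a) (\<lambda>m. Y $$ (r,m)) + phiPj P a b i j (boff P b) (\<lambda>m. Y $$ (r,m))))
     + xi * (\<Sum>r<pd P. \<Sum>m<ncols P. (Y $$ (r,m))\<^sup>2)"
    unfolding PsiG_expand esum_sum by (simp add: sum.distrib sum_distrib_left)
  also have "esum P (\<lambda>a b i j. \<Sum>r<pd P. if a = b then phiQ P a b i j (boff P a) (boff P b) (\<lambda>m. Y $$ (r,m))
      else W a b i j * (phiPi P a b i j (boff P a) (\<lambda>m. Y $$ (r,m)) + phiPj P a b i j (boff P b) (\<lambda>m. Y $$ (r,m))))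
     = esum P (\<lambda>a b i j. if a = b then qf P a b i j Y else W a b i j * pf P a b i j Y)"
  proof (rule esum_cong)
    fix a b i j assume e: "edge P a b i j"
    note w = edge_wf[OF wf e]
    show "(\<Sum>r<pd P. if a = b then phiQ P a b i j (boff P a) (boff P b) (\<lambda>m. Y $$ (r,m))
      else W a b i j * (phiPi P a b i j (boff P a) (\<lambda>m. Y $$ (r,m)) + phiPj P a b i j (boff P b) (\<lambda>m. Y $$ (r,m))))
      = (if a = b then qf P a b i j Y else W a b i j * pf P a b i j Y)"
      using qf_rows[OF w(7,4), of Y] pf_rows[OF w(4), of Y] by (cases "a = b") (simp_all add: sum_distrib_left)
  qed
  also have "(\<Sum>r<pd P. \<Sum>m<ncols P. (Y $$ (r,m))\<^sup>2) = fro_sq Y"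
    using Y by (simp add: fro_sq_eq)
  finally show ?thesis .
qed

lemma MPsi_rows:
  assumes wf: "well_formed P"
  shows "(\<Sum>r<pd P. MPsi P W (\<lambda>m. Y $$ (r,m))) =
    esum P (\<lambda>a b i j. if a = b then qf P a b i j Y else W a b i j * qf P a b i j Y)"
  unfolding MPsi_def esum_sum[symmetric]
proof (rule esum_cong)
  fix a b i j assume e: "edge P a b i j"
  note w = edge_wf[OF wf e]
  show "(\<Sum>r<pd P. if a = b then phiQ P a b i j (boff P a) (boff P b) (\<lambda>m. Y $$ (r,m))
      else W a b i j * phiQ P a b i j (boff P a) (boff P b) (\<lambda>m. Y $$ (r,m)))
      = (if a = b then qf P a b i j Y else W a b i j * qf P a b i j Y)"
    using qf_rows[OF w(7,4), of Y] by (cases "a = b") (simp_all add: sum_distrib_left)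
qed

lemma qf_fun:
  assumes wf: "well_formed P" and e: "edge P a b i j"
  shows "qf P a b i j = rowsum (pd P) (phiQ P a b i j (boff P a) (boff P b))"
  using qf_rows[OF edge_wf(7,4)[OF wf e]] unfolding rowsum_def by auto

lemma qf_grad:
  assumes wf: "well_formed P" and e: "edge P a b i j" and X: "X \<in> carrier_mat (pd P) (ncols P)"
  shows "\<exists>L. hasgrad (pd P) (ncols P) (qf P a b i j) X L \<and>
     (\<forall>Y\<in>carrier_mat (pd P) (ncols P). qf P a b i j Y = qf P a b i j X + L (Y - X) + qf P a b i j (Y - X))"
  unfolding qf_fun[OF wf e] by (rule hasgrad_rowsum[OF isquad_phiQ_edge[OF wf e] X])

lemma qf_nonneg:
  assumes wf: "well_formed P" and e: "edge P a b i j"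
  shows "qf P a b i j Y \<ge> 0"
  unfolding qf_def fro_sq_eq vec_sq_eq using edge_wf(5,6)[OF wf e]
  by (intro add_nonneg_nonneg mult_nonneg_nonneg sum_nonneg) auto

lemma qf_le_pf:
  assumes wf: "well_formed P" and e: "edge P a b i j"
  shows "qf P a b i j Y \<le> pf P a b i j Y"
  unfolding qf_rows[OF edge_wf(7,4)[OF wf e]] pf_rows[OF edge_wf(4)[OF wf e]]
  by (intro sum_mono phiQ_le edge_wf[OF wf e])

lemma Fij_grad:
  assumes wf: "well_formed P" and lk: "loss_kernel rho rho'" and e: "edge P a b i j"
    and Xk: "Xk \<in> carrier_mat (pd P) (ncols P)"
  shows "hasgrad (pd P) (ncols P) (Fij P rho a b i j) Xk (mat_inner (gradX P (Fij P rho a b i j) Xk))"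
    "a = b \<Longrightarrow> X \<in> carrier_mat (pd P) (ncols P) \<Longrightarrow> Fij P rho a b i j X =
       Fij P rho a b i j Xk + mat_inner (gradX P (Fij P rho a b i j) Xk) (X - Xk) + qf P a b i j (X - Xk) / 2"
    "a \<noteq> b \<Longrightarrow> X \<in> carrier_mat (pd P) (ncols P) \<Longrightarrow> Fij P rho a b i j X \<le> Eij P rho rho' a b i j X Xk"
proof -
  let ?d = "pd P" and ?N = "ncols P"
  obtain L where L: "hasgrad ?d ?N (qf P a b i j) Xk L"
    and ex: "\<And>Y. Y \<in> carrier_mat ?d ?N \<Longrightarrow> qf P a b i j Y = qf P a b i j Xk + L (Y - Xk) + qf P a b i j (Y - Xk)"
    using qf_grad[OF wf e Xk] by blast
  have nn: "\<And>Y. qf P a b i j Y \<ge> 0" by (rule qf_nonneg[OF wf e])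
  have der: "(rho has_real_derivative rho' s) (at s within {0..})" if "s \<ge> 0" for s
    using lk that unfolding loss_kernel_def by auto
  have r01: "0 \<le> rho' s \<and> rho' s \<le> 1" if "s \<ge> 0" for s
    using lk that unfolding loss_kernel_def by auto
  have conc: "concave_on {0..} rho" using lk unfolding loss_kernel_def by auto
  define G where "G = (if a = b then (\<lambda>H. L H / 2) else (\<lambda>H. rho' (qf P a b i j Xk) * L H / 2))"
  have hg: "hasgrad ?d ?N (Fij P rho a b i j) Xk G"
  proof (cases "a = b")
    case True
    have "hasgrad ?d ?N (\<lambda>Y. qf P a b i j Y / 2) Xk (\<lambda>H. L H / 2)" by (rule hasgrad_div[OF L])
    moreover have "Fij P rho a b i j = (\<lambda>Y. qf P a b i j Y / 2)" using True by (auto simp: Fij_def)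
    ultimately show ?thesis using True by (simp add: G_def)
  next
    case False
    have "hasgrad ?d ?N (\<lambda>Y. rho (qf P a b i j Y)) Xk (\<lambda>H. rho' (qf P a b i j Xk) * L H)"
      by (rule hasgrad_comp[OF L Xk der[OF nn] nn])
    from hasgrad_div[OF this, of 2]
    have "hasgrad ?d ?N (\<lambda>Y. rho (qf P a b i j Y) / 2) Xk (\<lambda>H. rho' (qf P a b i j Xk) * L H / 2)" .
    moreover have "Fij P rho a b i j = (\<lambda>Y. rho (qf P a b i j Y) / 2)" using False by (auto simp: Fij_def)
    ultimately show ?thesis using False by (simp add: G_def)
  qed
  have gG: "mat_inner (gradX P (Fij P rho a b i j) Xk) H = G H" if "H \<in> carrier_mat ?d ?N" for H
    unfolding gradX_def by (rule hasgrad_mgrad(1)[OF hg that])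
  show "hasgrad ?d ?N (Fij P rho a b i j) Xk (mat_inner (gradX P (Fij P rho a b i j) Xk))"
    unfolding gradX_def by (rule hasgrad_self[OF hg])
  show "a = b \<Longrightarrow> X \<in> carrier_mat ?d ?N \<Longrightarrow> Fij P rho a b i j X =
       Fij P rho a b i j Xk + mat_inner (gradX P (Fij P rho a b i j) Xk) (X - Xk) + qf P a b i j (X - Xk) / 2"
  proof -
    assume ab: "a = b" and X: "X \<in> carrier_mat ?d ?N"
    have D: "X - Xk \<in> carrier_mat ?d ?N" using X Xk by (simp add: minus_carrier_mat)
    show ?thesis using ex[OF X] gG[OF D] ab by (simp add: Fij_def G_def add_divide_distrib)
  qed
  show "a \<noteq> b \<Longrightarrow> X \<in> carrier_mat ?d ?N \<Longrightarrow> Fij P rho a b i j X \<le> Eij P rho rho' a b i j X Xk"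
  proof -
    assume ab: "a \<noteq> b" and X: "X \<in> carrier_mat ?d ?N"
    have D: "X - Xk \<in> carrier_mat ?d ?N" using X Xk by (simp add: minus_carrier_mat)
    let ?w = "rho' (qf P a b i j Xk)"
    have w: "0 \<le> ?w" using r01[OF nn] by auto
    have t: "rho (qf P a b i j X) \<le> rho (qf P a b i j Xk) + ?w * (qf P a b i j X - qf P a b i j Xk)"
      by (rule concave_tangent[OF conc der[OF nn] nn nn])
    have "qf P a b i j X - qf P a b i j Xk \<le> L (X - Xk) + pf P a b i j (X - Xk)"
      using ex[OF X] qf_le_pf[OF wf e, of "X - Xk"] by simp
    from mult_left_mono[OF this w] t
    have "rho (qf P a b i j X) \<le> rho (qf P a b i j Xk) + ?w * L (X - Xk) + ?w * pf P a b i j (X - Xk)"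
      by (simp add: algebra_simps)
    then show ?thesis
      unfolding Eij_def using gG[OF D] ab by (simp add: Fij_def G_def omega_def field_simps)
  qed
qed

lemma blk_minus:
  assumes "X \<in> carrier_mat (pd P) (ncols P)" "Y \<in> carrier_mat (pd P) (ncols P)" "a < pA P"
  shows "blk P X a - blk P Y a = blk P (X - Y) a"
  using assms blk_bound[OF assms(3)] by (intro eq_matI) (auto simp: blk_def)

lemma blk_carrier: "blk P X a \<in> carrier_mat (pd P) (bdim P a)"
  unfolding blk_def by simp

lemma mat_inner_blocks:
  assumes G: "G \<in> carrier_mat (pd P) (ncols P)" and H: "H \<in> carrier_mat (pd P) (ncols P)"
  shows "(\<Sum>a<pA P. mat_inner (blk P G a) (blk P H a)) = mat_inner G H"
proof -
  have "(\<Sum>a<pA P. mat_inner (blk P G a) (blk P H a)) =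
     (\<Sum>a<pA P. \<Sum>r<pd P. \<Sum>c<bdim P a. G $$ (r, boff P a + c) * H $$ (r, boff P a + c))"
    unfolding mat_inner_def blk_def by (intro sum.cong refl) auto
  also have "\<dots> = (\<Sum>r<pd P. \<Sum>a<pA P. \<Sum>c<bdim P a. G $$ (r, boff P a + c) * H $$ (r, boff P a + c))"
    by (rule sum.swap)
  also have "\<dots> = (\<Sum>r<pd P. \<Sum>c<ncols P. G $$ (r, c) * H $$ (r, c))"
    unfolding ncols_eq boff_def by (rule sum.cong[OF refl]) (rule sum_blocks[symmetric])
  also have "\<dots> = mat_inner G H" by (rule mat_inner_eq[OF G, symmetric])
  finally show ?thesis .
qed

lemma wnorm_blocks:
  assumes wf: "well_formed P" and D: "D \<in> carrier_mat (pd P) (ncols P)"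
  shows "(\<Sum>a<pA P. wnorm_sq (qmat (bdim P a) (psiB P W xi a)) (blk P D a)) = wnorm_sq (qmat (ncols P) (PsiG P W xi)) D"
proof -
  have "(\<Sum>a<pA P. wnorm_sq (qmat (bdim P a) (psiB P W xi a)) (blk P D a)) =
    (\<Sum>a<pA P. \<Sum>r<pd P. psiB P W xi a (\<lambda>m. D $$ (r, boff P a + m)))"
  proof (intro sum.cong refl)
    fix a assume a: "a \<in> {..<pA P}"
    have q: "isquad (bdim P a) (psiB P W xi a)" using psiB_isquad[OF wf] a by auto
    show "wnorm_sq (qmat (bdim P a) (psiB P W xi a)) (blk P D a) = (\<Sum>r<pd P. psiB P W xi a (\<lambda>m. D $$ (r, boff P a + m)))"
      unfolding qmat_wnorm[OF q blk_carrier]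
      by (intro sum.cong refl isquad_cong[OF q]) (auto simp: blk_def)
  qed
  also have "\<dots> = (\<Sum>r<pd P. PsiG P W xi (\<lambda>m. D $$ (r, m)))"
    unfolding PsiG_def by (rule sum.swap)
  also have "\<dots> = wnorm_sq (qmat (ncols P) (PsiG P W xi)) D"
    by (rule qmat_wnorm[OF PsiG_isquad[OF wf] D, symmetric])
  finally show ?thesis .
qed

theorem proposition3:
  fixes P :: pgo_data and rho rho' :: "real \<Rightarrow> real" and xi :: real
  assumes wf: "well_formed P"
    and lk: "loss_kernel rho rho'"
    and xi: "xi \<ge> 0"
  shows "\<exists>Gam. psd (ncols P) Gam \<and>
    (\<forall>Xk \<in> feasible P. \<exists>Gs.
       (\<forall>a < pA P. psd (bdim P a) (Gs a)) \<and>
       (\<forall>X \<in> carrier_mat (pd P) (ncols P).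
          Gsur P rho rho' xi X Xk = (\<Sum>a<pA P. Gblk P rho (Gs a) a X Xk) + Fobj P rho Xk) \<and>
       (\<forall>X \<in> carrier_mat (pd P) (ncols P).
          Gsur P rho rho' xi X Xk =
            wnorm_sq (blockdiag P Gs) (X - Xk) / 2 + mat_inner (gradX P (Fobj P rho) Xk) (X - Xk)
            + Fobj P rho Xk) \<and>
       (\<forall>X \<in> carrier_mat (pd P) (ncols P). Gsur P rho rho' xi X Xk \<ge> Fobj P rho X) \<and>
       Gsur P rho rho' xi Xk Xk = Fobj P rho Xk \<and>
       loewner_ge (ncols P) (blockdiag P Gs) (Mk P rho' Xk) \<and>
       loewner_ge (ncols P) Gam (blockdiag P Gs))"
proof -
  let ?d = "pd P" and ?N = "ncols P"
  define W1 :: "nat \<Rightarrow> nat \<Rightarrow> nat \<Rightarrow> nat \<Rightarrow> real" where "W1 = (\<lambda>a b i j. 1)"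
  define Gam where "Gam = qmat ?N (PsiG P W1 xi)"
  have psdGam: "psd ?N Gam"
    unfolding Gam_def by (rule qmat_psd[OF PsiG_isquad[OF wf] PsiG_nonneg[OF wf _ xi]]) (simp add: W1_def)
  show ?thesis
  proof (intro exI[of _ Gam] conjI psdGam ballI)
    fix Xk assume "Xk \<in> feasible P"
    then have Xk: "Xk \<in> carrier_mat ?d ?N" by (simp add: feasible_def)
    define W where "W = omega P rho' Xk"
    have W01: "0 \<le> W a b i j \<and> W a b i j \<le> 1" if e: "edge P a b i j" for a b i j
      using lk qf_nonneg[OF wf e, of Xk] unfolding W_def omega_def loss_kernel_def by auto
    define Gs where "Gs = (\<lambda>a. qmat (bdim P a) (psiB P W xi a))"
    have BD: "blockdiag P Gs = qmat ?N (PsiG P W xi)" unfolding Gs_def by (rule blockdiag_eq[OF wf])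
    note FG = Fij_grad[OF wf lk _ Xk]
    let ?gF = "\<lambda>H. esum P (\<lambda>a b i j. mat_inner (gradX P (Fij P rho a b i j) Xk) H)"
    have Fobj_eq: "Fobj P rho = (\<lambda>Y. esum P (\<lambda>a b i j. Fij P rho a b i j Y))"
      by (auto simp: Fobj_def esum_def)
    have hgF: "hasgrad ?d ?N (Fobj P rho) Xk ?gF"
      unfolding Fobj_eq by (rule hasgrad_esum) (rule FG(1))
    have gF: "mat_inner (gradX P (Fobj P rho) Xk) H = ?gF H" if "H \<in> carrier_mat ?d ?N" for H
      using hasgrad_mgrad(1)[OF hgF that] by (simp add: gradX_def)
    have Gsur_eq: "Gsur P rho rho' xi X Xk = esum P (\<lambda>a b i j. if a = b then Fij P rho a b i j X else Eij P rho rho' a b i j X Xk)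
        + xi / 2 * fro_sq (X - Xk)" for X
      unfolding Gsur_def esum_if by simp
    have mainb: "Gsur P rho rho' xi X Xk =
        wnorm_sq (qmat ?N (PsiG P W xi)) (X - Xk) / 2 + mat_inner (gradX P (Fobj P rho) Xk) (X - Xk) + Fobj P rho Xk"
      if X: "X \<in> carrier_mat ?d ?N" for X
    proof -
      have D: "X - Xk \<in> carrier_mat ?d ?N" using X Xk by (simp add: minus_carrier_mat)
      have "esum P (\<lambda>a b i j. if a = b then Fij P rho a b i j X else Eij P rho rho' a b i j X Xk) =
          esum P (\<lambda>a b i j. Fij P rho a b i j Xk + mat_inner (gradX P (Fij P rho a b i j) Xk) (X - Xk)
            + (if a = b then qf P a b i j (X - Xk) else W a b i j * pf P a b i j (X - Xk)) / 2)"
      proof (rule esum_cong)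
        fix a b i j assume e: "edge P a b i j"
        show "(if a = b then Fij P rho a b i j X else Eij P rho rho' a b i j X Xk) =
          Fij P rho a b i j Xk + mat_inner (gradX P (Fij P rho a b i j) Xk) (X - Xk)
            + (if a = b then qf P a b i j (X - Xk) else W a b i j * pf P a b i j (X - Xk)) / 2"
          using FG(2)[OF e _ X] by (cases "a = b") (auto simp: Eij_def W_def)
      qed
      also have "\<dots> = Fobj P rho Xk + ?gF (X - Xk)
          + esum P (\<lambda>a b i j. if a = b then qf P a b i j (X - Xk) else W a b i j * pf P a b i j (X - Xk)) / 2"
        unfolding esum_add esum_div Fobj_eq by simp
      finally have "Gsur P rho rho' xi X Xk = Fobj P rho Xk + ?gF (X - Xk)
          + (esum P (\<lambda>a b i j. if a = b then qf P a b i j (X - Xk) else W a b i j * pf P a b i j (X - Xk))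
             + xi * fro_sq (X - Xk)) / 2"
        unfolding Gsur_eq by (simp add: field_simps)
      also have "esum P (\<lambda>a b i j. if a = b then qf P a b i j (X - Xk) else W a b i j * pf P a b i j (X - Xk))
             + xi * fro_sq (X - Xk) = wnorm_sq (qmat ?N (PsiG P W xi)) (X - Xk)"
        unfolding qmat_wnorm[OF PsiG_isquad[OF wf] D] PsiG_rows[OF wf D] ..
      finally show ?thesis using gF[OF D] by simp
    qed
    have p1: "\<forall>a<pA P. psd (bdim P a) (Gs a)"
      unfolding Gs_def using W01 by (auto intro!: qmat_psd psiB_isquad[OF wf] psiB_nonneg[OF wf _ _ xi])
    have p3: "\<forall>X\<in>carrier_mat ?d ?N. Gsur P rho rho' xi X Xk =
            wnorm_sq (blockdiag P Gs) (X - Xk) / 2 + mat_inner (gradX P (Fobj P rho) Xk) (X - Xk) + Fobj P rho Xk"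
      using mainb unfolding BD by blast
    have p2: "\<forall>X\<in>carrier_mat ?d ?N. Gsur P rho rho' xi X Xk = (\<Sum>a<pA P. Gblk P rho (Gs a) a X Xk) + Fobj P rho Xk"
    proof
      fix X :: "real mat" assume X: "X \<in> carrier_mat ?d ?N"
      have D: "X - Xk \<in> carrier_mat ?d ?N" using X Xk by (simp add: minus_carrier_mat)
      have G: "gradX P (Fobj P rho) Xk \<in> carrier_mat ?d ?N"
        using hasgrad_mgrad(2)[OF hgF D] by (simp add: gradX_def)
      have "(\<Sum>a<pA P. Gblk P rho (Gs a) a X Xk) =
         (\<Sum>a<pA P. wnorm_sq (qmat (bdim P a) (psiB P W xi a)) (blk P (X - Xk) a)) / 2
         + (\<Sum>a<pA P. mat_inner (blk P (gradX P (Fobj P rho) Xk) a) (blk P (X - Xk) a))"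
        unfolding Gblk_def Gs_def sum.distrib sum_divide_distrib
        by (intro arg_cong2[where f="(+)"] sum.cong refl) (simp_all add: blk_minus[OF X Xk])
      also have "\<dots> = wnorm_sq (qmat ?N (PsiG P W xi)) (X - Xk) / 2 + mat_inner (gradX P (Fobj P rho) Xk) (X - Xk)"
        unfolding wnorm_blocks[OF wf D] mat_inner_blocks[OF G D] ..
      finally show "Gsur P rho rho' xi X Xk = (\<Sum>a<pA P. Gblk P rho (Gs a) a X Xk) + Fobj P rho Xk"
        using mainb[OF X] by simp
    qed
    have p4: "\<forall>X\<in>carrier_mat ?d ?N. Fobj P rho X \<le> Gsur P rho rho' xi X Xk"
    proof
      fix X :: "real mat" assume X: "X \<in> carrier_mat ?d ?N"
      have "Fobj P rho X \<le> esum P (\<lambda>a b i j. if a = b then Fij P rho a b i j X else Eij P rho rho' a b i j X Xk)"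
        unfolding Fobj_eq by (rule esum_mono) (use FG(3)[OF _ _ X] in auto)
      moreover have "0 \<le> xi / 2 * fro_sq (X - Xk)"
        using xi by (intro mult_nonneg_nonneg) (auto simp: fro_sq_eq intro!: sum_nonneg)
      ultimately show "Fobj P rho X \<le> Gsur P rho rho' xi X Xk" unfolding Gsur_eq by linarith
    qed
    have p5: "Gsur P rho rho' xi Xk Xk = Fobj P rho Xk"
    proof -
      have Z: "Xk - Xk \<in> carrier_mat ?d ?N" using Xk by (simp add: minus_carrier_mat)
      have G: "gradX P (Fobj P rho) Xk \<in> carrier_mat ?d ?N"
        using hasgrad_mgrad(2)[OF hgF Z] by (simp add: gradX_def)
      have z1: "mat_inner (gradX P (Fobj P rho) Xk) (Xk - Xk) = 0"
        unfolding mat_inner_eq[OF G] using Xk by (intro sum.neutral ballI) auto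
      have "wnorm_sq (qmat ?N (PsiG P W xi)) (Xk - Xk) = (\<Sum>r<?d. PsiG P W xi (\<lambda>m. 0))"
        unfolding qmat_wnorm[OF PsiG_isquad[OF wf] Z]
        by (intro sum.cong refl isquad_cong[OF PsiG_isquad[OF wf]]) (use Xk in auto)
      also have "\<dots> = 0" using isquad_0[OF PsiG_isquad[OF wf]] by simp
      finally show ?thesis using mainb[OF Xk] z1 by simp
    qed
    have p6: "loewner_ge ?N Gam (blockdiag P Gs)"
      unfolding BD Gam_def
      by (rule qmat_loewner[OF PsiG_isquad[OF wf] PsiG_isquad[OF wf]])
        (rule PsiG_mono[OF wf, unfolded W1_def[symmetric]], rule W01)
    have p7: "loewner_ge ?N (blockdiag P Gs) (Mk P rho' Xk)"
    proof -
      define MQ where "MQ = qmat ?N (MPsi P W)"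
      have qM: "isquad ?N (MPsi P W)" by (rule MPsi_isquad[OF wf])
      have formM: "wnorm_sq MQ Y =
          (\<Sum>a<pA P. \<Sum>(i,j) \<in> pE P a a. qf P a a i j Y) +
          (\<Sum>a<pA P. \<Sum>b \<in> {..<pA P} - {a}. \<Sum>(i,j) \<in> pE P a b. omega P rho' Xk a b i j * qf P a b i j Y)"
        if Y: "Y \<in> carrier_mat ?d ?N" for Y
        unfolding MQ_def W_def[symmetric] qmat_wnorm[OF qM Y] MPsi_rows[OF wf] esum_if ..
      let ?Prop = "\<lambda>M. M \<in> carrier_mat ?N ?N \<and> transpose_mat M = M \<and>
        (\<forall>Y \<in> carrier_mat ?d ?N. wnorm_sq M Y =
          (\<Sum>a<pA P. \<Sum>(i,j) \<in> pE P a a. qf P a a i j Y) +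
          (\<Sum>a<pA P. \<Sum>b \<in> {..<pA P} - {a}. \<Sum>(i,j) \<in> pE P a b. omega P rho' Xk a b i j * qf P a b i j Y))"
      have "?Prop MQ" using formM by (simp add: MQ_def qmat_transpose)
      then have PM: "?Prop (Mk P rho' Xk)" unfolding Mk_def by (rule someI)
      define M where "M = Mk P rho' Xk"
      have Mc: "M \<in> carrier_mat ?N ?N" and Mt: "transpose_mat M = M" using PM unfolding M_def by auto
      have d0: "0 < ?d" using wf unfolding well_formed_def by auto
      let ?Q = "qmat ?N (PsiG P W xi)"
      have Qc: "?Q \<in> carrier_mat ?N ?N" by simp
      show ?thesis unfolding BD M_def[symmetric] loewner_ge_def psd_def
      proof (intro conjI ballI)
        show "?Q - M \<in> carrier_mat ?N ?N" using Mc by (simp add: minus_carrier_mat)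
        show "transpose_mat (?Q - M) = ?Q - M"
          using transpose_minus[OF Qc Mc] Mt by (simp add: qmat_transpose)
        fix v :: "real vec" assume v: "v \<in> carrier_vec ?N"
        have Yv: "rowmat ?d ?N v \<in> carrier_mat ?d ?N" unfolding rowmat_def by simp
        have "v \<bullet> (M *\<^sub>v v) = wnorm_sq M (rowmat ?d ?N v)" by (rule vec_wnorm[OF Mc v d0])
        also have "\<dots> = wnorm_sq MQ (rowmat ?d ?N v)" using PM formM[OF Yv] Yv unfolding M_def by auto
        also have "\<dots> = v \<bullet> (MQ *\<^sub>v v)" unfolding MQ_def by (rule vec_wnorm[OF _ v d0, symmetric]) simp
        also have "\<dots> = MPsi P W (\<lambda>m. v $ m)" unfolding MQ_def by (rule qmat_vec[OF qM v])
        finally have vM: "v \<bullet> (M *\<^sub>v v) = MPsi P W (\<lambda>m. v $ m)" .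
        have vQ: "v \<bullet> (?Q *\<^sub>v v) = PsiG P W xi (\<lambda>m. v $ m)" by (rule qmat_vec[OF PsiG_isquad[OF wf] v])
        have "v \<bullet> ((?Q - M) *\<^sub>v v) = v \<bullet> (?Q *\<^sub>v v) - v \<bullet> (M *\<^sub>v v)"
          unfolding minus_mult_distrib_mat_vec[OF Qc Mc v]
          by (rule scalar_prod_minus_distrib[OF v mult_mat_vec_carrier[OF Qc v] mult_mat_vec_carrier[OF Mc v]])
        also have "\<dots> \<ge> 0" unfolding vQ vM using MPsi_le_PsiG[OF wf _ xi, of W] W01 by auto
        finally show "0 \<le> v \<bullet> ((?Q - M) *\<^sub>v v)" .
      qed
    qed
    show "\<exists>Gs.
       (\<forall>a < pA P. psd (bdim P a) (Gs a)) \<and>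
       (\<forall>X \<in> carrier_mat (pd P) (ncols P).
          Gsur P rho rho' xi X Xk = (\<Sum>a<pA P. Gblk P rho (Gs a) a X Xk) + Fobj P rho Xk) \<and>
       (\<forall>X \<in> carrier_mat (pd P) (ncols P).
          Gsur P rho rho' xi X Xk =
            wnorm_sq (blockdiag P Gs) (X - Xk) / 2 + mat_inner (gradX P (Fobj P rho) Xk) (X - Xk)
            + Fobj P rho Xk) \<and>
       (\<forall>X \<in> carrier_mat (pd P) (ncols P). Gsur P rho rho' xi X Xk \<ge> Fobj P rho X) \<and>
       Gsur P rho rho' xi Xk Xk = Fobj P rho Xk \<and>
       loewner_ge (ncols P) (blockdiag P Gs) (Mk P rho' Xk) \<and>
       loewner_ge (ncols P) Gam (blockdiag P Gs)"
      by (rule exI[of _ Gs]) (intro conjI p1 p2 p3 p4 p5 p6 p7)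
  qed
qed

end
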